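(* For every problem $f$ we have $\overline{f'}\le_{sW}(\overline f)'\equiv_{sW}\overline{(\overline f)'}$. In particular, if $f$ is strongly complete (i.e. $f\equiv_{sW}\overline f$), then its jump $f'$ is strongly complete.
   Context: Represented space $(X,\delta_X)$: set with surjective partial $\delta_X:\subseteq\mathbb{N}^\mathbb{N}\to X$. A problem $f:\subseteq X\rightrightarrows Y$ is a partial multi-valued map with nonempty values on its domain; $F\vdash f$ means $\delta_YF(p)\in f(\delta_X(p))$ whenever $\delta_X(p)\in\mathrm{dom}(f)$. $f\le_{sW}g$ iff there are computable partial $H,K:\subseteq\mathbb{N}^\mathbb{N}\to\mathbb{N}^\mathbb{N}$ with $HGK\vdash f$ for all $G\vdash g$; $\equiv_{sW}$ is the induced equivalence. $\lim:\subseteq\mathbb{N}^\mathbb{N}\to\mathbb{N}^\mathbb{N}$ maps $\langle p_0,p_1,\dots\rangle$ (standard infinite tupling) to $\lim_n p_n$ when it exists. The jump of $f:\subseteq X\rightrightarrows Y$ is $f':\subseteq X'\rightrightarrows Y$, the same multi-valued map with input space $X'=(X,\delta_X\circ\lim)$. For $p\in\mathbb{N}^\mathbb{N}$, $p-1$ is the concatenation of $p(0)-1,p(1)-1,\dots$ with $0-1$ the empty word. The completion of $(X,\delta_X)$ is $\overline X=X\cup\{\bot\}$ with $\delta_{\overline X}(p)=\delta_X(p-1)$ if $p-1$ is an infinite sequence in $\mathrm{dom}(\delta_X)$, $\delta_{\overline X}(p)=\bot$ otherwise; the completion of $f$ is $\overline f:\overline X\rightrightarrows\overline Y$, $\overline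 f(x)=f(x)$ on $\mathrm{dom}(f)$ and $\overline Y$ otherwise. *)

theory Defs
  imports Main "HOL-Library.Infinite_Set" "HOL-Library.Nat_Bijection"
begin

type_synonym baire = "nat \<Rightarrow> nat"

datatype recf = Zero | Succ | Proj nat | Orac | Comp recf "recf list"
  | Prec recf recf | Mu recf

inductive ev :: "baire \<Rightarrow> recf \<Rightarrow> nat list \<Rightarrow> nat \<Rightarrow> bool" for p :: baire where
  ev_zero: "ev p Zero xs 0"
| ev_succ: "ev p Succ (x # xs) (Suc x)"
| ev_proj: "i < length xs \<Longrightarrow> ev p (Proj i) xs (xs ! i)"
| ev_orac: "ev p Orac (x # xs) (p x)"
| ev_comp: "length ys = length gs \<Longrightarrow> (\<forall>i<length gs. ev p (gs ! i) xs (ys ! i))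
             \<Longrightarrow> ev p f ys z \<Longrightarrow> ev p (Comp f gs) xs z"
| ev_prec0: "ev p f xs y \<Longrightarrow> ev p (Prec f g) (0 # xs) y"
| ev_precS: "ev p (Prec f g) (n # xs) y \<Longrightarrow> ev p g (n # y # xs) z
             \<Longrightarrow> ev p (Prec f g) (Suc n # xs) z"
| ev_mu: "ev p f (n # xs) 0 \<Longrightarrow> (\<forall>m<n. \<exists>y. ev p f (m # xs) (Suc y))
             \<Longrightarrow> ev p (Mu f) xs n"

definition computable :: "(baire \<Rightarrow> baire option) \<Rightarrow> bool" where
  "computable F \<longleftrightarrow> (\<exists>e. \<forall>p q. F p = Some q \<longrightarrow> (\<forall>n. ev p e [n] (q n)))"

type_synonym 'a rep = "baire \<Rightarrow> 'a option"

definition represented :: "'a rep \<Rightarrow> bool" where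
  "represented \<delta> \<longleftrightarrow> (\<forall>x. \<exists>p. \<delta> p = Some x)"

text \<open>A problem f :\<subseteq> X \<rightrightarrows> Y is a map to sets of values; its domain
  is the set of points with nonempty value set.\<close>
type_synonym ('a, 'b) problem = "'a \<Rightarrow> 'b set"

definition realizes :: "'a rep \<Rightarrow> 'b rep \<Rightarrow> ('a, 'b) problem \<Rightarrow> (baire \<Rightarrow> baire option) \<Rightarrow> bool" where
  "realizes \<delta>X \<delta>Y f F \<longleftrightarrow>
     (\<forall>p x. \<delta>X p = Some x \<and> f x \<noteq> {} \<longrightarrow>
        (\<exists>q y. F p = Some q \<and> \<delta>Y q = Some y \<and> y \<in> f x))"

definition sW_le :: "'a rep \<Rightarrow> 'b rep \<Rightarrow> ('a, 'b) problem \<Rightarrow>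
                     'c rep \<Rightarrow> 'd rep \<Rightarrow> ('c, 'd) problem \<Rightarrow> bool" where
  "sW_le \<delta>X \<delta>Y f \<delta>Z \<delta>W g \<longleftrightarrow>
     (\<exists>H K. computable H \<and> computable K \<and>
        (\<forall>G. realizes \<delta>Z \<delta>W g G \<longrightarrow>
              realizes \<delta>X \<delta>Y f (\<lambda>p. Option.bind (Option.bind (K p) G) H)))"

definition sW_equiv :: "'a rep \<Rightarrow> 'b rep \<Rightarrow> ('a, 'b) problem \<Rightarrow>
                        'c rep \<Rightarrow> 'd rep \<Rightarrow> ('c, 'd) problem \<Rightarrow> bool" where
  "sW_equiv \<delta>X \<delta>Y f \<delta>Z \<delta>W g \<longleftrightarrow> sW_le \<delta>X \<delta>Y f \<delta>Z \<delta>W g \<and> sW_le \<delta>Z \<delta>W g \<delta>X \<delta>Y f"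

text \<open>Standard infinite tupling: the i-th component of p is (\<lambda>j. p (prod_encode (i,j))).
  lim maps p to the pointwise limit of its components, if it exists.\<close>

definition lim_conv :: "baire \<Rightarrow> baire \<Rightarrow> bool" where
  "lim_conv p q \<longleftrightarrow> (\<forall>j. \<exists>N. \<forall>i\<ge>N. p (prod_encode (i, j)) = q j)"

definition baire_lim :: "baire \<Rightarrow> baire option" where
  "baire_lim p = (if \<exists>q. lim_conv p q then Some (THE q. lim_conv p q) else None)"

definition jump_rep :: "'a rep \<Rightarrow> 'a rep" where
  "jump_rep \<delta> = (\<lambda>p. Option.bind (baire_lim p) \<delta>)"

text \<open>p - 1: concatenation of the words p(0)-1, p(1)-1, ... where 0-1 is the empty
  word and n+1-1 is the one-letter word n.  It is an infinite sequence iff p has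
  infinitely many nonzero entries; then its k-th letter is p(n_k)-1 for the k-th
  index n_k with p(n_k) > 0.\<close>

definition minus_one :: "baire \<Rightarrow> baire option" where
  "minus_one p = (if infinite {n. 0 < p n}
                  then Some (\<lambda>k. p (enumerate {n. 0 < p n} k) - 1) else None)"

text \<open>Completion of a represented space: \<bottom> is None.\<close>
definition compl_rep :: "'a rep \<Rightarrow> 'a option rep" where
  "compl_rep \<delta> = (\<lambda>p. case minus_one p of
                        Some q \<Rightarrow> (case \<delta> q of Some x \<Rightarrow> Some (Some x) | None \<Rightarrow> Some None)
                      | None \<Rightarrow> Some None)"

definition compl_prob :: "('a, 'b) problem \<Rightarrow> ('a option, 'b option) problem" where
  "compl_prob f = (\<lambda>x. case x of Some a \<Rightarrow> (if f a \<noteq> {} then Some ` f a else UNIV)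
                                | None \<Rightarrow> UNIV)"

end

theory Submission
  imports Defs
begin



definition rc :: "nat \<Rightarrow> (baire \<Rightarrow> nat list \<Rightarrow> nat) \<Rightarrow> bool" where
  "rc k F \<longleftrightarrow> (\<exists>e. \<forall>p xs. length xs = k \<longrightarrow> ev p e xs (F p xs))"

lemma rc_cong: "rc k F \<Longrightarrow> (\<And>p xs. length xs = k \<Longrightarrow> F p xs = G p xs) \<Longrightarrow> rc k G"
  unfolding rc_def by metis

lemma rc_zero: "rc k (\<lambda>p xs. 0)"
  unfolding rc_def by (auto intro: ev_zero)

lemma rc_proj: "i < k \<Longrightarrow> rc k (\<lambda>p xs. xs ! i)"
  unfolding rc_def by (auto intro: ev_proj)

lemma rc_succ: "rc k F \<Longrightarrow> rc k (\<lambda>p xs. Suc (F p xs))"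
  unfolding rc_def
proof (elim exE)
  fix e assume e: "\<forall>p xs. length xs = k \<longrightarrow> ev p e xs (F p xs)"
  show "\<exists>e. \<forall>p xs. length xs = k \<longrightarrow> ev p e xs (Suc (F p xs))"
    apply (rule exI[of _ "Comp Succ [e]"])
    using e by (auto intro!: ev_comp[where ys="[F _ _]"] ev_succ[where xs="[]", simplified])
qed

lemma rc_orac: "rc k F \<Longrightarrow> rc k (\<lambda>p xs. p (F p xs))"
  unfolding rc_def
proof (elim exE)
  fix e assume e: "\<forall>p xs. length xs = k \<longrightarrow> ev p e xs (F p xs)"
  show "\<exists>e. \<forall>p xs. length xs = k \<longrightarrow> ev p e xs (p (F p xs))"
    apply (rule exI[of _ "Comp Orac [e]"])
    using e by (auto intro!: ev_comp[where ys="[F _ _]"] ev_orac[where xs="[]", simplified])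
qed

lemma rc_list: "\<forall>G\<in>set Gs. rc k G \<Longrightarrow>
  \<exists>es. length es = length Gs \<and> (\<forall>i<length Gs. \<forall>p xs. length xs = k \<longrightarrow> ev p (es!i) xs ((Gs!i) p xs))"
proof (induction Gs)
  case Nil then show ?case by auto
next
  case (Cons G Gs)
  then obtain es where es: "length es = length Gs"
    "\<forall>i<length Gs. \<forall>p xs. length xs = k \<longrightarrow> ev p (es!i) xs ((Gs!i) p xs)" by auto
  from Cons.prems obtain e where e: "\<forall>p xs. length xs = k \<longrightarrow> ev p e xs (G p xs)"
    unfolding rc_def by auto
  show ?case
    apply (rule exI[of _ "e # es"])
    using es e by (auto simp: nth_Cons split: nat.split)
qed

lemma rc_comp: "rc m F \<Longrightarrow> length Gs = m \<Longrightarrow> \<forall>G\<in>set Gs. rc k G \<Longrightarrow>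
   rc k (\<lambda>p xs. F p (map (\<lambda>G. G p xs) Gs))"
proof -
  assume F: "rc m F" and l: "length Gs = m" and G: "\<forall>G\<in>set Gs. rc k G"
  obtain es where es: "length es = length Gs"
    "\<forall>i<length Gs. \<forall>p xs. length xs = k \<longrightarrow> ev p (es!i) xs ((Gs!i) p xs)"
    using rc_list[OF G] by auto
  obtain f where f: "\<forall>p xs. length xs = m \<longrightarrow> ev p f xs (F p xs)" using F unfolding rc_def by auto
  show ?thesis unfolding rc_def
  proof (rule exI[of _ "Comp f es"], intro allI impI)
    fix p xs assume lx: "length (xs::nat list) = k"
    show "ev p (Comp f es) xs (F p (map (\<lambda>G. G p xs) Gs))"
      by (rule ev_comp[where ys="map (\<lambda>G. G p xs) Gs"]) (use es f l lx in auto)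
  qed
qed

primrec prec :: "(nat list \<Rightarrow> nat) \<Rightarrow> (nat list \<Rightarrow> nat) \<Rightarrow> nat \<Rightarrow> nat list \<Rightarrow> nat" where
  "prec f g 0 ys = f ys"
| "prec f g (Suc n) ys = g (n # prec f g n ys # ys)"

lemma rc_prec: "rc k F \<Longrightarrow> rc (Suc (Suc k)) G \<Longrightarrow>
   rc (Suc k) (\<lambda>p xs. prec (F p) (G p) (hd xs) (tl xs))"
proof -
  assume F: "rc k F" and G: "rc (Suc (Suc k)) G"
  obtain f where f: "\<forall>p xs. length xs = k \<longrightarrow> ev p f xs (F p xs)" using F unfolding rc_def by auto
  obtain g where g: "\<forall>p xs. length xs = Suc (Suc k) \<longrightarrow> ev p g xs (G p xs)" using G unfolding rc_def by auto
  have "length ys = k \<Longrightarrow> ev p (Prec f g) (n # ys) (prec (F p) (G p) n ys)" for p n ys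
  proof (induction n)
    case 0 then show ?case using f by (auto intro: ev_prec0)
  next
    case (Suc n) then show ?case using g by (auto intro: ev_precS)
  qed
  then show ?thesis unfolding rc_def
    by (intro exI[of _ "Prec f g"]) (auto simp: length_Suc_conv)
qed

lemma rc_comp1: "rc 1 F \<Longrightarrow> rc k G \<Longrightarrow> rc k (\<lambda>p xs. F p [G p xs])"
  using rc_comp[of 1 F "[G]" k] by auto
lemma rc_comp2: "rc 2 F \<Longrightarrow> rc k G \<Longrightarrow> rc k H \<Longrightarrow> rc k (\<lambda>p xs. F p [G p xs, H p xs])"
  using rc_comp[of 2 F "[G,H]" k] by auto
lemma rc_comp3: "rc 3 F \<Longrightarrow> rc k G \<Longrightarrow> rc k H \<Longrightarrow> rc k I \<Longrightarrow> rc k (\<lambda>p xs. F p [G p xs, H p xs, I p xs])"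
  using rc_comp[of 3 F "[G,H,I]" k] by auto

lemma rc_const: "rc k (\<lambda>p xs. c)"
  by (induction c) (auto intro: rc_zero dest: rc_succ)

lemma rc_permute: "rc m F \<Longrightarrow> length is = m \<Longrightarrow> \<forall>i\<in>set is. i < k \<Longrightarrow>
   rc k (\<lambda>p xs. F p (map (\<lambda>i. xs!i) is))"
proof -
  assume a: "rc m F" "length is = m" "\<forall>i\<in>set is. i < k"
  have "rc k (\<lambda>p xs. F p (map (\<lambda>G. G p xs) (map (\<lambda>i p xs. xs!i) is)))"
    using a by (intro rc_comp) (auto intro: rc_proj)
  then show ?thesis by (simp add: comp_def)
qed




lemma rc_hdtl_cong: "rc (Suc k) (\<lambda>p xs. F p (hd xs) (tl xs)) \<Longrightarrow> rc (Suc k) (\<lambda>p xs. F p (xs!0) (tl xs))"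
  by (erule rc_cong) (auto simp: length_Suc_conv)

lemma prec_add: "prec (\<lambda>ys. ys!0) (\<lambda>zs. Suc (zs!Suc 0)) a ys = a + ys!0"
  by (induction a) auto
lemma rc_add2: "rc 2 (\<lambda>p xs. xs!0 + xs!1)"
proof -
  have "rc 2 (\<lambda>p xs. prec (\<lambda>ys. ys!0) (\<lambda>zs. Suc (zs!1)) (hd xs) (tl xs))"
    using rc_prec[of 1 "\<lambda>p ys. ys!0" "\<lambda>p zs. Suc (zs!1)"] by (simp add: numeral_2_eq_2 rc_proj rc_succ)
  then show ?thesis by (rule rc_cong) (auto simp: prec_add length_Suc_conv numeral_2_eq_2)
qed
lemma rc_add: assumes "rc k F" "rc k G" shows "rc k (\<lambda>p xs. F p xs + G p xs)"
  by (rule rc_cong[OF rc_comp2[OF rc_add2 assms]]) simp_all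

lemma prec_pred: "prec (\<lambda>ys. 0) (\<lambda>zs. zs!0) a ys = a - 1"
  by (induction a) auto
lemma rc_pred1: "rc 1 (\<lambda>p xs. xs!0 - 1)"
proof -
  have "rc 1 (\<lambda>p xs. prec (\<lambda>ys. 0) (\<lambda>zs. zs!0) (hd xs) (tl xs))"
    using rc_prec[of 0 "\<lambda>p ys. 0" "\<lambda>p zs. zs!0"] by (auto intro: rc_proj rc_zero)
  then show ?thesis by (rule rc_cong) (auto simp: prec_pred length_Suc_conv)
qed
lemma rc_pred: "rc k F \<Longrightarrow> rc k (\<lambda>p xs. F p xs - 1)"
  by (rule rc_cong[OF rc_comp1[OF rc_pred1]]) simp_all

lemma prec_sub: "prec (\<lambda>ys. ys!0) (\<lambda>zs. zs!Suc 0 - Suc 0) b ys = ys!0 - b"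
  by (induction b) auto
lemma rc_sub2: "rc 2 (\<lambda>p xs. xs!1 - xs!0)"
proof -
  have "rc 2 (\<lambda>p xs. prec (\<lambda>ys. ys!0) (\<lambda>zs. zs!1 - 1) (hd xs) (tl xs))"
  proof -
    have "rc 3 (\<lambda>p zs. zs!1 - 1)" by (rule rc_pred[OF rc_proj]) simp
    then show ?thesis using rc_prec[of 1 "\<lambda>p ys. ys!0" "\<lambda>p zs. zs!1 - 1"] by (simp add: numeral_2_eq_2 numeral_3_eq_3 rc_proj)
  qed
  then show ?thesis by (rule rc_cong) (auto simp: prec_sub length_Suc_conv numeral_2_eq_2)
qed
lemma rc_sub: assumes "rc k F" "rc k G" shows "rc k (\<lambda>p xs. F p xs - G p xs)"
  by (rule rc_cong[OF rc_comp2[OF rc_sub2 assms(2,1)]]) simp_all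

lemma prec_mult: "prec (\<lambda>ys. 0) (\<lambda>zs. zs!Suc 0 + zs!Suc (Suc 0)) a ys = a * ys!0"
  by (induction a) auto
lemma rc_mult2: "rc 2 (\<lambda>p xs. xs!0 * xs!1)"
proof -
  have "rc 2 (\<lambda>p xs. prec (\<lambda>ys. 0) (\<lambda>zs. zs!1 + zs!2) (hd xs) (tl xs))"
    using rc_prec[of 1 "\<lambda>p ys. 0" "\<lambda>p zs. zs!1 + zs!2"] by (simp add: numeral_2_eq_2 rc_proj rc_zero rc_add[OF rc_proj rc_proj])
  then show ?thesis by (rule rc_cong) (auto simp: prec_mult length_Suc_conv numeral_2_eq_2)
qed
lemma rc_mult: assumes "rc k F" "rc k G" shows "rc k (\<lambda>p xs. F p xs * G p xs)"
  by (rule rc_cong[OF rc_comp2[OF rc_mult2 assms]]) simp_all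

lemma prec_ifz: "prec (\<lambda>ys. ys!0) (\<lambda>zs. zs!Suc (Suc (Suc 0))) c ys = (if c = 0 then ys!0 else ys!Suc 0)"
  by (cases c) auto
lemma rc_ifz3: "rc 3 (\<lambda>p xs. if xs!0 = 0 then xs!1 else xs!2)"
proof -
  have "rc 3 (\<lambda>p xs. prec (\<lambda>ys. ys!0) (\<lambda>zs. zs!3) (hd xs) (tl xs))"
    using rc_prec[of 2 "\<lambda>p ys. ys!0" "\<lambda>p zs. zs!3"] by (simp add: numeral_2_eq_2 numeral_3_eq_3 rc_proj)
  then show ?thesis by (rule rc_cong) (auto simp: prec_ifz length_Suc_conv numeral_3_eq_3)
qed
lemma rc_ifz: assumes "rc k C" "rc k A" "rc k B" shows "rc k (\<lambda>p xs. if C p xs = 0 then A p xs else B p xs)"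
  by (rule rc_cong[OF rc_comp3[OF rc_ifz3 assms]]) (simp_all add: numeral_2_eq_2)

definition rcP :: "nat \<Rightarrow> (baire \<Rightarrow> nat list \<Rightarrow> bool) \<Rightarrow> bool" where
  "rcP k P \<longleftrightarrow> rc k (\<lambda>p xs. if P p xs then 1 else 0)"

lemma rc_if: "rcP k P \<Longrightarrow> rc k A \<Longrightarrow> rc k B \<Longrightarrow> rc k (\<lambda>p xs. if P p xs then A p xs else B p xs)"
  unfolding rcP_def by (drule rc_ifz[of k _ B A]) (auto elim: rc_cong)

lemma rcP_cong: "rcP k P \<Longrightarrow> (\<And>p xs. length xs = k \<Longrightarrow> P p xs = Q p xs) \<Longrightarrow> rcP k Q"
  unfolding rcP_def by (erule rc_cong) auto

lemma rcP_less: assumes "rc k F" "rc k G" shows "rcP k (\<lambda>p xs. F p xs < G p xs)"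
proof -
  have "rc k (\<lambda>p xs. if G p xs - F p xs = 0 then 0 else 1)"
    by (rule rc_ifz[OF rc_sub[OF assms(2,1)] rc_const rc_const])
  then show ?thesis unfolding rcP_def by (rule rc_cong) auto
qed
lemma rcP_not: assumes "rcP k P" shows "rcP k (\<lambda>p xs. \<not> P p xs)"
proof -
  have "rc k (\<lambda>p xs. 1 - (if P p xs then 1 else 0))"
    by (rule rc_sub[OF rc_const assms[unfolded rcP_def]])
  then show ?thesis unfolding rcP_def by (rule rc_cong) auto
qed
lemma rcP_conj: assumes "rcP k P" "rcP k Q" shows "rcP k (\<lambda>p xs. P p xs \<and> Q p xs)"
proof -
  have "rc k (\<lambda>p xs. (if P p xs then 1 else 0) * (if Q p xs then 1 else 0))"
    by (rule rc_mult[OF assms[unfolded rcP_def]])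
  then show ?thesis unfolding rcP_def by (rule rc_cong) auto
qed
lemma rcP_le: assumes "rc k F" "rc k G" shows "rcP k (\<lambda>p xs. F p xs \<le> G p xs)"
  by (rule rcP_cong[OF rcP_not[OF rcP_less[OF assms(2,1)]]]) auto
lemma rcP_eq: assumes "rc k F" "rc k G" shows "rcP k (\<lambda>p xs. F p xs = G p xs)"
  by (rule rcP_cong[OF rcP_conj[OF rcP_le[OF assms] rcP_le[OF assms(2,1)]]]) auto
lemma rcP_disj: assumes "rcP k P" "rcP k Q" shows "rcP k (\<lambda>p xs. P p xs \<or> Q p xs)"
  by (rule rcP_cong[OF rcP_not[OF rcP_conj[OF rcP_not[OF assms(1)] rcP_not[OF assms(2)]]]]) auto
lemma rcP_comp: "rcP m P \<Longrightarrow> length Gs = m \<Longrightarrow> \<forall>G\<in>set Gs. rc k G \<Longrightarrow>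
   rcP k (\<lambda>p xs. P p (map (\<lambda>G. G p xs) Gs))"
  unfolding rcP_def by (drule (2) rc_comp) simp
lemma rcP_permute: "rcP m P \<Longrightarrow> length is = m \<Longrightarrow> \<forall>i\<in>set is. i < k \<Longrightarrow>
   rcP k (\<lambda>p xs. P p (map (\<lambda>i. xs!i) is))"
  unfolding rcP_def by (drule (2) rc_permute) simp

lemma map_nth_shift2: "length ys = k \<Longrightarrow> map (\<lambda>i. (a # b # ys) ! i) [2..<k + 2] = ys"
  by (rule nth_equalityI) (simp_all del: upt_Suc add: nth_upt)

primrec bminr :: "(nat \<Rightarrow> bool) \<Rightarrow> nat \<Rightarrow> nat" where
  "bminr P 0 = 0"
| "bminr P (Suc t) = (if bminr P t < t then bminr P t else if P t then t else Suc t)"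

lemma bminr_eq: "bminr P n = (if \<exists>m<n. P m then LEAST m. P m else n)"
proof (induction n)
  case 0 then show ?case by simp
next
  case (Suc n)
  show ?case
  proof (cases "\<exists>m<n. P m")
    case True
    then have "(LEAST m. P m) < n" by (meson LeastI_ex not_less_Least order.strict_trans2 not_le)
    moreover have "\<exists>m<Suc n. P m" using True less_SucI by blast
    ultimately show ?thesis using Suc True by simp
  next
    case False
    then have "P n \<Longrightarrow> (LEAST m. P m) = n" by (metis Least_equality not_le_imp_less)
    then show ?thesis using Suc False by (auto simp: less_Suc_eq)
  qed
qed

lemma rc_bminr: "rcP (Suc k) P \<Longrightarrow> rc (Suc k) (\<lambda>p xs. bminr (\<lambda>m. P p (m # tl xs)) (xs!0))"
proof -
  assume P: "rcP (Suc k) P"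
  have P': "rcP (Suc (Suc k)) (\<lambda>p zs. P p (map (\<lambda>i. zs!i) (0 # [2..<k+2])))"
    by (rule rcP_permute[OF P]) auto
  have G: "rc (Suc (Suc k)) (\<lambda>p zs. if zs!1 < zs!0 then zs!1 else
            if P p (map (\<lambda>i. zs!i) (0 # [2..<k+2])) then zs!0 else Suc (zs!0))"
    by (rule rc_if[OF rcP_less[OF rc_proj rc_proj] rc_proj rc_if[OF P' rc_proj rc_succ[OF rc_proj]]]) simp_all
  have R: "rc (Suc k) (\<lambda>p xs. prec (\<lambda>ys. 0) (\<lambda>zs. if zs!1 < zs!0 then zs!1 else
            if P p (map (\<lambda>i. zs!i) (0 # [2..<k+2])) then zs!0 else Suc (zs!0)) (hd xs) (tl xs))"
    by (rule rc_prec[OF rc_zero G])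
  have E: "length ys = k \<Longrightarrow> prec (\<lambda>ys. 0) (\<lambda>zs. if zs!1 < zs!0 then zs!1 else
            if P p (map (\<lambda>i. zs!i) (0 # [2..<k+2])) then zs!0 else Suc (zs!0)) n ys
         = bminr (\<lambda>m. P p (m # ys)) n" for p n ys
  proof (induction n)
    case (Suc n)
    have "map (\<lambda>i. (n # r # ys) ! i) [2..<k+2] = ys" for r
      using Suc.prems by (rule map_nth_shift2)
    then show ?case using Suc by simp
  qed simp
  show ?thesis
  proof (rule rc_cong[OF R], goal_cases)
    case (1 p xs)
    then obtain y ys where xs: "xs = y # ys" and l: "length ys = k" by (cases xs) auto
    show ?case
      unfolding xs list.sel nth_Cons_0 by (rule E[OF l])
  qed
qed

primrec bmax :: "(nat \<Rightarrow> bool) \<Rightarrow> nat \<Rightarrow> nat" where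
  "bmax Q 0 = 0"
| "bmax Q (Suc t) = (if Q (Suc t) then Suc t else bmax Q t)"

lemma bmax_le: "bmax Q n \<le> n" by (induction n) auto
lemma bmax_Q: "i \<le> n \<Longrightarrow> Q i \<Longrightarrow> Q (bmax Q n)"
  by (induction n) (auto simp: le_Suc_eq)
lemma bmax_ge: "i \<le> n \<Longrightarrow> Q i \<Longrightarrow> i \<le> bmax Q n"
  by (induction n) (auto simp: le_Suc_eq)
lemma bmax_stable: "(\<And>i. Q i \<Longrightarrow> i \<le> a) \<Longrightarrow> a \<le> n \<Longrightarrow> bmax Q n = bmax Q a"
proof (induction n)
  case (Suc n)
  then show ?case by (cases "a = Suc n") (auto simp: le_Suc_eq dest: Suc(2))
qed simp

lemma rc_bmax: "rcP (Suc k) P \<Longrightarrow> rc (Suc k) (\<lambda>p xs. bmax (\<lambda>m. P p (m # tl xs)) (xs!0))"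
proof -
  assume P: "rcP (Suc k) P"
  have P': "rcP (Suc (Suc k)) (\<lambda>p zs. P p ((Suc (zs!0)) # map (\<lambda>i. zs!i) [2..<k+2]))"
  proof -
    have "rcP (Suc (Suc k)) (\<lambda>p zs. P p (map (\<lambda>G. G p zs) ((\<lambda>p zs. Suc (zs!0)) # map (\<lambda>i p zs. zs!i) [2..<k+2])))"
      by (rule rcP_comp[OF P]) (auto intro: rc_succ rc_proj)
    then show ?thesis by (rule rcP_cong) (simp add: comp_def)
  qed
  have G: "rc (Suc (Suc k)) (\<lambda>p zs. if P p ((Suc (zs!0)) # map (\<lambda>i. zs!i) [2..<k+2]) then Suc (zs!0) else zs!1)"
    by (rule rc_if[OF P' rc_succ[OF rc_proj] rc_proj]) simp_all
  have R: "rc (Suc k) (\<lambda>p xs. prec (\<lambda>ys. 0) (\<lambda>zs. if P p ((Suc (zs!0)) # map (\<lambda>i. zs!i) [2..<k+2]) then Suc (zs!0) else zs!1) (hd xs) (tl xs))"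
    by (rule rc_prec[OF rc_zero G])
  have E: "length ys = k \<Longrightarrow> prec (\<lambda>ys. 0) (\<lambda>zs. if P p ((Suc (zs!0)) # map (\<lambda>i. zs!i) [2..<k+2]) then Suc (zs!0) else zs!1) n ys
         = bmax (\<lambda>m. P p (m # ys)) n" for p n ys
  proof (induction n)
    case (Suc n)
    have "map (\<lambda>i. (n # r # ys) ! i) [2..<k+2] = ys" for r
      using Suc.prems by (rule map_nth_shift2)
    then show ?case using Suc by simp
  qed simp
  show ?thesis
  proof (rule rc_cong[OF R], goal_cases)
    case (1 p xs)
    then obtain y ys where xs: "xs = y # ys" and l: "length ys = k" by (cases xs) auto
    show ?case
      unfolding xs list.sel nth_Cons_0 by (rule E[OF l])
  qed
qed




lemma map_nth_app: "length xs = k \<Longrightarrow> map (\<lambda>i. (ys @ xs) ! i) [length ys..<length ys + k] = xs"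
  by (rule nth_equalityI) (simp_all del: upt_Suc add: nth_upt nth_append)

lemma prec_tri: "prec (\<lambda>ys. 0) (\<lambda>zs. Suc (zs ! Suc 0 + zs ! 0)) t ys = triangle t"
  by (induction t) auto

lemma rc_triangle: assumes "rc k F" shows "rc k (\<lambda>p xs. triangle (F p xs))"
proof -
  have "rc 2 (\<lambda>p zs. zs!1 + Suc (zs!0))" by (rule rc_add[OF rc_proj rc_succ[OF rc_proj]]) simp_all
  then have "rc 1 (\<lambda>p xs. prec (\<lambda>ys. 0) (\<lambda>zs. zs!1 + Suc (zs!0)) (hd xs) (tl xs))"
    using rc_prec[of 0 "\<lambda>p ys. 0" "\<lambda>p zs. zs!1 + Suc (zs!0)"] by (simp add: numeral_2_eq_2 rc_zero)
  then have "rc 1 (\<lambda>p xs. triangle (xs!0))"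
    by (rule rc_cong) (auto simp: length_Suc_conv prec_tri)
  from rc_comp1[OF this assms] show ?thesis by simp
qed

lemma rc_pe: assumes "rc k F" "rc k G" shows "rc k (\<lambda>p xs. prod_encode (F p xs, G p xs))"
  unfolding prod_encode_def by (simp, intro rc_add rc_triangle assms)

definition pds :: "nat \<Rightarrow> nat" where "pds m = bminr (\<lambda>s. m < triangle (Suc s)) (Suc m)"

lemma triangle_ge: "m \<le> triangle m"
  by (induction m) auto

lemma prod_decode_pds: "prod_decode m = (m - triangle (pds m), pds m - (m - triangle (pds m)))"
proof -
  define s where "s = pds m"
  have ex: "\<exists>t<Suc m. m < triangle (Suc t)"
    using triangle_ge[of "Suc m"] by (intro exI[of _ m]) auto
  have s: "s = (LEAST t. m < triangle (Suc t))" unfolding s_def pds_def bminr_eq using ex by simp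
  have s1: "m < triangle (Suc s)" unfolding s using ex by (metis LeastI)
  have s2: "triangle s \<le> m"
  proof (cases s)
    case (Suc s') then have "\<not> m < triangle (Suc s')" using s not_less_Least by (metis lessI)
    then show ?thesis using Suc by simp
  qed simp
  have "prod_encode (m - triangle s, s - (m - triangle s)) = m"
    using s1 s2 unfolding prod_encode_def by auto
  then have "prod_decode m = (m - triangle s, s - (m - triangle s))"
    by (metis prod_encode_inverse)
  then show ?thesis unfolding s_def .
qed

lemma rc_pds: assumes "rc k F" shows "rc k (\<lambda>p xs. pds (F p xs))"
proof -
  have "rcP 2 (\<lambda>p xs. xs!1 < triangle (Suc (xs!0)))"
    by (rule rcP_less[OF rc_proj rc_triangle[OF rc_succ[OF rc_proj]]]) auto
  from rc_bminr[OF this[unfolded numeral_2_eq_2]]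
  have "rc 2 (\<lambda>p xs. bminr (\<lambda>s. xs!1 < triangle (Suc s)) (xs!0))"
    by (simp add: numeral_2_eq_2) (erule rc_cong, auto simp: length_Suc_conv)
  from rc_comp2[OF this rc_succ[OF rc_proj, of 0 1] rc_proj[of 0 1]]
  have "rc 1 (\<lambda>p xs. pds (xs!0))" by (simp add: pds_def)
  from rc_comp1[OF this assms] show ?thesis by simp
qed

lemma rc_fst_pd: assumes "rc k F" shows "rc k (\<lambda>p xs. fst (prod_decode (F p xs)))"
  unfolding prod_decode_pds by (simp, intro rc_sub rc_triangle rc_pds assms)
lemma rc_snd_pd: assumes "rc k F" shows "rc k (\<lambda>p xs. snd (prod_decode (F p xs)))"
  unfolding prod_decode_pds by (simp, intro rc_sub rc_triangle rc_pds assms)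

lemma computable_rc: "rc 1 F \<Longrightarrow> computable (\<lambda>p. Some (\<lambda>n. F p [n]))"
  unfolding computable_def rc_def by force




definition nth0 :: "nat list \<Rightarrow> nat \<Rightarrow> nat" where
  "nth0 xs i = (if i < length xs then xs ! i else 0)"

lemma size_mem: "x \<in> set gs \<Longrightarrow> size x \<le> size_list size gs"
  by (induction gs) auto

function A :: "baire \<Rightarrow> nat \<Rightarrow> recf \<Rightarrow> nat list \<Rightarrow> nat" where
  "A w n Zero xs = 0"
| "A w n Succ xs = Suc (nth0 xs 0)"
| "A w n (Proj i) xs = nth0 xs i"
| "A w n Orac xs = w (prod_encode (n, nth0 xs 0))"
| "A w n (Comp f gs) xs = A w n f (map (\<lambda>g. A w n g xs) gs)"
| "A w n (Prec f g) [] = 0"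
| "A w n (Prec f g) (0 # ys) = A w n f ys"
| "A w n (Prec f g) (Suc m # ys) = A w n g (m # A w n (Prec f g) (m # ys) # ys)"
| "A w n (Mu f) xs = bminr (\<lambda>m. A w n f (m # xs) = 0) n"
  by pat_completeness auto
termination
  by (relation "measures [\<lambda>(w,n,e,xs). size e, \<lambda>(w,n,e,xs). case xs of [] \<Rightarrow> 0 | m # _ \<Rightarrow> m]")
     (auto dest!: size_mem)




lemma map_nth_shift3: "length ys = k \<Longrightarrow> map (\<lambda>i. (a # b # c # ys) ! i) [3..<k + 3] = ys"
  by (rule nth_equalityI) (simp_all del: upt_Suc add: nth_upt)

lemma rc_nth0: "rc (Suc k) (\<lambda>w xs. nth0 (tl xs) i)"
proof (cases "i < k")
  case True
  have "rc (Suc k) (\<lambda>w xs. xs ! Suc i)" using True by (intro rc_proj) simp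
  then show ?thesis by (rule rc_cong) (use True in \<open>auto simp: nth0_def length_Suc_conv\<close>)
next
  case False
  show ?thesis by (rule rc_cong[OF rc_zero]) (auto simp: nth0_def False)
qed

lemma rc_A: "rc (Suc k) (\<lambda>w xs. A w (xs!0) e (tl xs))"
proof (induction e arbitrary: k)
  case Zero
  show ?case by (rule rc_cong[OF rc_zero]) simp
next
  case Succ
  show ?case by (rule rc_cong[OF rc_succ[OF rc_nth0]]) simp
next
  case (Proj i)
  show ?case by (rule rc_cong[OF rc_nth0]) simp
next
  case Orac
  show ?case by (rule rc_cong[OF rc_orac[OF rc_pe[OF rc_proj rc_nth0]]]) simp_all
next
  case (Comp f gs)
  have "rc (Suc k) (\<lambda>w xs. (\<lambda>w ys. A w (ys!0) f (tl ys)) w (map (\<lambda>G. G w xs)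
          ((\<lambda>w xs. xs!0) # map (\<lambda>g w xs. A w (xs!0) g (tl xs)) gs)))"
    by (rule rc_comp[OF Comp.IH(1)[of "length gs"]]) (auto intro: rc_proj Comp.IH(2))
  then show ?case by (rule rc_cong) (simp add: comp_def)
next
  case (Prec f g)
  show ?case
  proof (cases k)
    case 0
    show ?thesis by (rule rc_cong[OF rc_zero]) (auto simp: 0 length_Suc_conv)
  next
    case (Suc k')
    define Bf where "Bf = (\<lambda>w (ys::nat list). A w (ys!0) f (tl ys))"
    define S where "S = (\<lambda>w (zs::nat list). A w (zs!2) g (zs!0 # zs!1 # map (\<lambda>i. zs!i) [3..<k'+3]))"
    have Bf: "rc (Suc k') Bf" unfolding Bf_def by (rule Prec.IH(1))
    have S: "rc (Suc (Suc (Suc k'))) S"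
    proof -
      have "rc (Suc (Suc (Suc k'))) (\<lambda>w zs. (\<lambda>w ys. A w (ys!0) g (tl ys)) w (map (\<lambda>i. zs!i) (2 # 0 # 1 # [3..<k'+3])))"
        by (rule rc_permute[OF Prec.IH(2)[of "Suc (Suc k')"]]) auto
      then show ?thesis unfolding S_def by (rule rc_cong) simp
    qed
    have R: "rc (Suc (Suc k')) (\<lambda>w xs. prec (Bf w) (S w) (hd xs) (tl xs))"
      by (rule rc_prec[OF Bf S])
    have E: "length ys = k' \<Longrightarrow> prec (Bf w) (S w) m (n # ys) = A w n (Prec f g) (m # ys)" for w m n ys
    proof (induction m)
      case 0 then show ?case by (simp add: Bf_def)
    next
      case (Suc m)
      have "map (\<lambda>i. (m # prec (Bf w) (S w) m (n # ys) # n # ys) ! i) [3..<k'+3] = ys"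
        by (rule map_nth_shift3) (use Suc.prems in simp)
      then show ?case using Suc by (simp del: upt_Suc add: S_def)
    qed
    have R2: "rc (Suc (Suc k')) (\<lambda>w xs. (\<lambda>w xs. prec (Bf w) (S w) (hd xs) (tl xs)) w (map (\<lambda>i. xs!i) (1 # 0 # [2..<k'+2])))"
      by (rule rc_permute[OF R]) auto
    show ?thesis unfolding Suc
    proof (rule rc_cong[OF R2], goal_cases)
      case (1 w xs)
      then obtain n m ys where xs: "xs = n # m # ys" and l: "length ys = k'"
        by (auto simp: length_Suc_conv)
      have "map (\<lambda>i. (n # m # ys) ! i) [2..<k'+2] = ys" by (rule map_nth_shift2[OF l])
      then show ?case unfolding xs using E[OF l] by (simp del: upt_Suc)
    qed
  qed
next
  case (Mu f)
  define P where "P = (\<lambda>w (zs::nat list). A w (zs!1) f (zs!0 # map (\<lambda>i. zs!i) [2..<k+2]) = 0)"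
  have P: "rcP (Suc (Suc k)) P"
  proof -
    have "rc (Suc (Suc k)) (\<lambda>w zs. (\<lambda>w ys. A w (ys!0) f (tl ys)) w (map (\<lambda>i. zs!i) (1 # 0 # [2..<k+2])))"
      by (rule rc_permute[OF Mu.IH[of "Suc k"]]) auto
    from rcP_eq[OF this rc_zero] show ?thesis unfolding P_def by (rule rcP_cong) simp
  qed
  have R: "rc (Suc (Suc k)) (\<lambda>w zs. bminr (\<lambda>m. P w (m # tl zs)) (zs!0))"
    by (rule rc_bminr[OF P])
  have R2: "rc (Suc k) (\<lambda>w xs. (\<lambda>w zs. bminr (\<lambda>m. P w (m # tl zs)) (zs!0)) w (map (\<lambda>i. xs!i) (0 # [0..<Suc k])))"
    by (rule rc_permute[OF R]) auto
  show ?case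
  proof (rule rc_cong[OF R2], goal_cases)
    case (1 w xs)
    then obtain n ys where xs: "xs = n # ys" and l: "length ys = k"
      by (auto simp: length_Suc_conv)
    have m1: "map (\<lambda>i. xs ! i) [0..<Suc k] = xs"
      using map_nth_app[of xs "Suc k" "[]"] 1 by simp
    have m2: "map (\<lambda>i. (m # n # ys) ! i) [2..<k+2] = ys" for m by (rule map_nth_shift2[OF l])
    show ?case using m1 m2 unfolding xs by (simp del: upt_Suc add: P_def)
  qed
qed




lemma A_conv:
  assumes "ev u e xs z" and lc: "lim_conv w u"
  shows "eventually (\<lambda>n. A w n e xs = z) sequentially"
  using assms(1)
proof (induction rule: ev.induct)
  case (ev_zero xs) then show ?case by simp
next
  case (ev_succ x xs) then show ?case by (simp add: nth0_def)
next
  case (ev_proj i xs) then show ?case by (simp add: nth0_def)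
next
  case (ev_orac x xs)
  from lc obtain N where "\<forall>i\<ge>N. w (prod_encode (i, x)) = u x" unfolding lim_conv_def by blast
  then show ?case by (auto simp: nth0_def eventually_sequentially)
next
  case (ev_comp ys gs xs f z)
  have "eventually (\<lambda>n. \<forall>i\<in>{..<length gs}. A w n (gs ! i) xs = ys ! i) sequentially"
    using ev_comp.IH(1) by (intro eventually_ball_finite) auto
  then have "eventually (\<lambda>n. map (\<lambda>g. A w n g xs) gs = ys) sequentially"
    by eventually_elim (use ev_comp.hyps(1) in \<open>auto intro!: nth_equalityI\<close>)
  then show ?case using ev_comp.IH(2) by eventually_elim simp
next
  case (ev_prec0 f xs y g) then show ?case by simp
next
  case (ev_precS f g n xs y z)
  from ev_precS.IH show ?case by eventually_elim simp
next
  case (ev_mu f n xs)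
  have "\<forall>m<n. eventually (\<lambda>k. A w k f (m # xs) \<noteq> 0) sequentially"
  proof (intro allI impI)
    fix m assume "m < n"
    then obtain y where "eventually (\<lambda>k. A w k f (m # xs) = Suc y) sequentially"
      using ev_mu.IH(2) by blast
    then show "eventually (\<lambda>k. A w k f (m # xs) \<noteq> 0) sequentially" by eventually_elim simp
  qed
  then have "eventually (\<lambda>k. \<forall>m\<in>{..<n}. A w k f (m # xs) \<noteq> 0) sequentially"
    by (intro eventually_ball_finite) auto
  moreover have "eventually (\<lambda>k. n < k) sequentially" by (rule eventually_gt_at_top)
  ultimately show ?case using ev_mu.IH(1)
  proof eventually_elim
    case (elim k)
    have "(LEAST m. A w k f (m # xs) = 0) = n"
      by (rule Least_equality) (use elim in \<open>force simp: not_less[symmetric]\<close>)+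
    then show ?case using elim by (auto simp: bminr_eq)
  qed
qed




lemma lim_conv_unique: "lim_conv w q \<Longrightarrow> lim_conv w q' \<Longrightarrow> q = q'"
proof (rule ext)
  fix j assume a: "lim_conv w q" "lim_conv w q'"
  obtain N where N: "\<forall>i\<ge>N. w (prod_encode (i, j)) = q j" using a(1) unfolding lim_conv_def by blast
  obtain N' where N': "\<forall>i\<ge>N'. w (prod_encode (i, j)) = q' j" using a(2) unfolding lim_conv_def by blast
  show "q j = q' j" using N[rule_format, of "max N N'"] N'[rule_format, of "max N N'"] by simp
qed

lemma baire_lim_eq: "lim_conv w q \<Longrightarrow> baire_lim w = Some q"
  unfolding baire_lim_def using lim_conv_unique by (auto intro!: the_equality)

lemma baire_lim_Some: "baire_lim w = Some q \<Longrightarrow> lim_conv w q"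
  unfolding baire_lim_def by (auto split: if_splits) (metis (mono_tags) lim_conv_unique theI)

definition LiftF :: "recf \<Rightarrow> baire \<Rightarrow> nat list \<Rightarrow> nat" where
  "LiftF e w xs = A w (fst (prod_decode (xs!0))) e [snd (prod_decode (xs!0))]"

lemma rc_LiftF: "rc 1 (LiftF e)"
proof -
  have "rc 2 (\<lambda>w xs. A w (xs!0) e (tl xs))" using rc_A[of 1 e] by (simp add: numeral_2_eq_2)
  from rc_comp2[OF this rc_fst_pd[OF rc_proj[of 0 1]] rc_snd_pd[OF rc_proj[of 0 1]]]
  show ?thesis unfolding LiftF_def by simp
qed

lemma LiftF_conv:
  assumes e: "\<forall>n. ev u e [n] (v n)" and lc: "lim_conv w u"
  shows "lim_conv (\<lambda>m. LiftF e w [m]) v"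
  unfolding lim_conv_def LiftF_def
proof
  fix j
  from A_conv[OF e[rule_format, of j] lc] obtain N where "\<forall>n\<ge>N. A w n e [j] = v j"
    unfolding eventually_sequentially by blast
  then show "\<exists>N. \<forall>i\<ge>N. A w (fst (prod_decode ([prod_encode (i, j)] ! 0))) e [snd (prod_decode ([prod_encode (i, j)] ! 0))] = v j"
    by auto
qed

fun osub :: "recf \<Rightarrow> recf \<Rightarrow> recf" where
  "osub d Orac = Comp d [Proj 0]"
| "osub d (Comp f gs) = Comp (osub d f) (map (osub d) gs)"
| "osub d (Prec f g) = Prec (osub d f) (osub d g)"
| "osub d (Mu f) = Mu (osub d f)"
| "osub d e = e"

lemma ev_osub:
  assumes "ev q e xs z" and q: "q = (\<lambda>m. F p [m])" and d: "\<forall>m. ev p d [m] (F p [m])"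
  shows "ev p (osub d e) xs z"
  using assms(1)
proof (induction rule: ev.induct)
  case (ev_zero xs) then show ?case by (simp add: ev.ev_zero)
next
  case (ev_succ x xs) then show ?case by (simp add: ev.ev_succ)
next
  case (ev_proj i xs) then show ?case by (simp add: ev.ev_proj)
next
  case (ev_orac x xs)
  have "ev p (Proj 0) (x # xs) ((x # xs) ! 0)" by (rule ev.ev_proj) simp
  then show ?case unfolding q by (auto intro!: ev_comp[where ys="[x]"] d[rule_format])
next
  case (ev_comp ys gs xs f z)
  then show ?case by (auto intro!: ev.ev_comp)
next
  case (ev_prec0 f xs y g) then show ?case by (auto intro: ev.ev_prec0)
next
  case (ev_precS f g n xs y z) then show ?case by (auto intro: ev.ev_precS)
next
  case (ev_mu f n xs) then show ?case by (auto intro!: ev.ev_mu)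
qed

lemma rc_subst: assumes "rc k G" "rc 1 F" shows "rc k (\<lambda>p xs. G (\<lambda>m. F p [m]) xs)"
proof -
  obtain g where g: "\<forall>q xs. length xs = k \<longrightarrow> ev q g xs (G q xs)" using assms(1) unfolding rc_def by blast
  obtain d where d: "\<forall>p xs. length xs = 1 \<longrightarrow> ev p d xs (F p xs)" using assms(2) unfolding rc_def by blast
  show ?thesis unfolding rc_def
    by (rule exI[of _ "osub d g"]) (auto intro!: ev_osub[OF g[rule_format]] d[rule_format])
qed




primrec chg :: "(nat \<Rightarrow> nat \<Rightarrow> nat) \<Rightarrow> nat \<Rightarrow> nat \<Rightarrow> nat" where
  "chg a 0 j = 0"
| "chg a (Suc n) j = chg a n j + (if a (Suc n) j = a n j then 0 else 1)"

primrec offs :: "(nat \<Rightarrow> nat) \<Rightarrow> nat \<Rightarrow> nat" where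
  "offs c 0 = 0"
| "offs c (Suc j) = offs c j + c j + 1"

definition blk :: "(nat \<Rightarrow> nat) \<Rightarrow> nat \<Rightarrow> nat" where
  "blk c j = offs c j + c j"

definition sv :: "(nat \<Rightarrow> nat) \<Rightarrow> (nat \<Rightarrow> nat \<Rightarrow> nat) \<Rightarrow> nat \<Rightarrow> nat \<Rightarrow> nat" where
  "sv \<phi> a n k = (let jj = bminr (\<lambda>j. k = blk (chg a n) j) (Suc k) in if jj \<le> k then \<phi> (a n jj) else 0)"

lemma chg_mono: "n \<le> n' \<Longrightarrow> chg a n j \<le> chg a n' j"
  by (induction n' rule: dec_induct) auto

lemma chg_dich: "(\<exists>N. \<forall>n\<ge>N. chg a n j = chg a N j) \<or> (\<forall>B. \<exists>N. \<forall>n\<ge>N. B < chg a n j)"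
proof (rule disjCI)
  assume H: "\<not> (\<forall>B. \<exists>N. \<forall>n\<ge>N. B < chg a n j)"
  then obtain B where B: "\<not> (\<exists>N. \<forall>n\<ge>N. B < chg a n j)" by blast
  have bd: "chg a n j \<le> B" for n
  proof (rule ccontr)
    assume "\<not> chg a n j \<le> B"
    then have "B < chg a n j" by simp
    then have "\<forall>m\<ge>n. B < chg a m j" using chg_mono[of n _ a j] by (blast intro: less_le_trans)
    then show False using B by blast
  qed
  define V where "V = range (\<lambda>n. chg a n j)"
  have "V \<subseteq> {..B}" unfolding V_def using bd by blast
  then have fin: "finite V" by (rule finite_subset) simp
  have "V \<noteq> {}" unfolding V_def by simp
  then have "Max V \<in> V" using fin by (intro Max_in) 
  then obtain N where N: "chg a N j = Max V" unfolding V_def by (metis rangeE)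
  have "\<forall>n\<ge>N. chg a n j = chg a N j"
  proof (intro allI impI)
    fix n assume "N \<le> n"
    have "chg a n j \<in> V" unfolding V_def by blast
    then have "chg a n j \<le> Max V" using Max_ge[OF fin] by blast
    then show "chg a n j = chg a N j" using chg_mono[OF \<open>N \<le> n\<close>, of a j] N by linarith
  qed
  then show "\<exists>N. \<forall>n\<ge>N. chg a n j = chg a N j" by blast
qed

lemma chg_const_a: assumes N: "\<forall>n\<ge>N. chg a n j = chg a N j" and n: "N \<le> n" shows "a n j = a N j"
  using n
proof (induction n rule: dec_induct)
  case (step n)
  have e1: "chg a (Suc n) j = chg a N j" by (rule N[rule_format]) (use step(1) in simp)
  have e2: "chg a n j = chg a N j" by (rule N[rule_format]) (use step(1) in simp)
  have "a (Suc n) j = a n j"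
  proof (rule ccontr)
    assume "a (Suc n) j \<noteq> a n j"
    then have "chg a (Suc n) j = chg a n j + 1" by simp
    then show False using e1 e2 by linarith
  qed
  then show ?case using step(3) by simp
qed simp

lemma offs_cong: "(\<forall>i<j. c i = c' i) \<Longrightarrow> offs c j = offs c' j"
  by (induction j) auto

lemma blk_strict_mono: "strict_mono (blk c)"
  unfolding strict_mono_Suc_iff blk_def by simp

lemma blk_less: "j < j' \<Longrightarrow> blk c j < blk c j'"
  using blk_strict_mono by (rule strict_monoD)

lemma blk_mono: "j \<le> j' \<Longrightarrow> blk c j \<le> blk c j'"
  using blk_less[of j j' c] by (cases "j = j'") auto

lemma bminr_cong: "(\<forall>m<n. P m = Q m) \<Longrightarrow> bminr P n = bminr Q n"
  by (induction n) auto

lemma bminr_P: "bminr P (Suc k) \<le> k \<Longrightarrow> P (bminr P (Suc k))"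
  by (auto simp: bminr_eq split: if_splits intro: LeastI)

lemma sv_core:
  assumes C: "\<forall>j<js. chg a n j = C j \<and> a n j = Dd j" and big: "js \<le> k \<longrightarrow> k < chg a n js"
  shows "sv \<phi> a n k = (let jj = bminr (\<lambda>j. j < js \<and> k = blk C j) (Suc k) in if jj \<le> k then \<phi> (Dd jj) else 0)"
proof -
  have P: "(k = blk (chg a n) j) = (j < js \<and> k = blk C j)" if "j < Suc k" for j
  proof (cases "j < js")
    case True
    have "\<forall>i<j. chg a n i = C i" using C True by auto
    then have "offs (chg a n) j = offs C j" by (rule offs_cong)
    moreover have "chg a n j = C j" using C True by blast
    ultimately have "blk (chg a n) j = blk C j" unfolding blk_def by simp
    then show ?thesis using True by simp
  next
    case False
    then have "js \<le> k" using that by simp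
    then have "k < chg a n js" using big by simp
    also have "\<dots> \<le> blk (chg a n) js" unfolding blk_def by simp
    also have "\<dots> \<le> blk (chg a n) j" using False by (intro blk_mono) simp
    finally show ?thesis using False by simp
  qed
  define Q where "Q = (\<lambda>j. j < js \<and> k = blk C j)"
  have eq: "bminr (\<lambda>j. k = blk (chg a n) j) (Suc k) = bminr Q (Suc k)"
    unfolding Q_def by (rule bminr_cong) (use P in blast)
  show ?thesis
  proof (cases "bminr Q (Suc k) \<le> k")
    case True
    then have "Q (bminr Q (Suc k))" by (rule bminr_P)
    then have lt: "bminr Q (Suc k) < js" unfolding Q_def by blast
    have "a n (bminr Q (Suc k)) = Dd (bminr Q (Suc k))" using C lt by blast
    then show ?thesis unfolding sv_def eq Let_def Q_def[symmetric] using True by simp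
  next
    case False
    then show ?thesis unfolding sv_def eq Let_def Q_def[symmetric] by simp
  qed
qed

lemma sv_conv: "\<exists>v N. \<forall>n\<ge>N. sv \<phi> a n k = v"
proof -
  define D where "D j = (\<forall>B. \<exists>N. \<forall>n\<ge>N. B < chg a n j)" for j
  define js where "js = (LEAST j. k < j \<or> D j)"
  have js1: "k < js \<or> D js" unfolding js_def by (rule LeastI[of _ "Suc k"]) simp
  have js2: "j < js \<Longrightarrow> \<not> D j" for j unfolding js_def using not_less_Least by blast
  have "\<forall>j\<in>{..<js}. \<exists>cd. \<exists>N. \<forall>n\<ge>N. chg a n j = fst cd \<and> a n j = snd cd"
  proof
    fix j assume "j \<in> {..<js}"
    then have "\<not> D j" using js2 by simp
    then obtain N where N: "\<forall>n\<ge>N. chg a n j = chg a N j" using chg_dich[of a j] unfolding D_def by blast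
    show "\<exists>cd. \<exists>N. \<forall>n\<ge>N. chg a n j = fst cd \<and> a n j = snd cd"
    proof (rule exI[of _ "(chg a N j, a N j)"], rule exI[of _ N], intro allI impI)
      fix n assume "N \<le> n"
      show "chg a n j = fst (chg a N j, a N j) \<and> a n j = snd (chg a N j, a N j)"
        using N[rule_format, OF \<open>N \<le> n\<close>] chg_const_a[OF N \<open>N \<le> n\<close>] by (simp only: fst_conv snd_conv)
    qed
  qed
  from bchoice[OF this] obtain CD where CD: "\<forall>j\<in>{..<js}. \<exists>N. \<forall>n\<ge>N. chg a n j = fst (CD j) \<and> a n j = snd (CD j)"
    by blast
  have ev1: "eventually (\<lambda>n. \<forall>j\<in>{..<js}. chg a n j = fst (CD j) \<and> a n j = snd (CD j)) sequentially"
    using CD by (intro eventually_ball_finite) (auto simp: eventually_sequentially)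
  have ev2: "eventually (\<lambda>n. js \<le> k \<longrightarrow> k < chg a n js) sequentially"
  proof (cases "js \<le> k")
    case True
    then have "D js" using js1 by simp
    then obtain N where "\<forall>n\<ge>N. k < chg a n js" unfolding D_def by blast
    then show ?thesis unfolding eventually_sequentially by blast
  qed (simp)
  from ev1 ev2 have "eventually (\<lambda>n. sv \<phi> a n k = (let jj = bminr (\<lambda>j. j < js \<and> k = blk (\<lambda>j. fst (CD j)) j) (Suc k) in if jj \<le> k then \<phi> (snd (CD jj)) else 0)) sequentially"
    by eventually_elim (rule sv_core, blast, blast)
  then show ?thesis unfolding eventually_sequentially by blast
qed

definition svlim :: "(nat \<Rightarrow> nat) \<Rightarrow> (nat \<Rightarrow> nat) \<Rightarrow> (nat \<Rightarrow> nat) \<Rightarrow> nat \<Rightarrow> nat" where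
  "svlim \<phi> C t k = (let jj = bminr (\<lambda>j. k = blk C j) (Suc k) in if jj \<le> k then \<phi> (t jj) else 0)"

lemma sv_conv_lim:
  assumes t: "\<forall>j. \<exists>N. \<forall>n\<ge>N. a n j = t j"
  shows "\<exists>C. \<forall>k. \<exists>N. \<forall>n\<ge>N. sv \<phi> a n k = svlim \<phi> C t k"
proof -
  have "\<forall>j. \<exists>c N. \<forall>n\<ge>N. chg a n j = c \<and> a n j = t j"
  proof
    fix j
    obtain N where N: "\<forall>n\<ge>N. a n j = t j" using t by blast
    have cN: "\<forall>n\<ge>N. chg a n j = chg a N j"
    proof (intro allI impI)
      fix n assume "N \<le> n" then show "chg a n j = chg a N j"
      proof (induction n rule: dec_induct)
        case (step n)
        have "a (Suc n) j = a n j" using N step(1) by simp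
        then show ?case using step(3) by simp
      qed simp
    qed
    show "\<exists>c N. \<forall>n\<ge>N. chg a n j = c \<and> a n j = t j" using N cN by blast
  qed
  then obtain C where C: "\<forall>j. \<exists>N. \<forall>n\<ge>N. chg a n j = C j \<and> a n j = t j"
    unfolding choice_iff by blast
  have "\<forall>k. \<exists>N. \<forall>n\<ge>N. sv \<phi> a n k = svlim \<phi> C t k"
  proof
    fix k
    have ev1: "eventually (\<lambda>n. \<forall>j\<in>{..<Suc k}. chg a n j = C j \<and> a n j = t j) sequentially"
      using C by (intro eventually_ball_finite) (auto simp: eventually_sequentially)
    then have "eventually (\<lambda>n. sv \<phi> a n k = (let jj = bminr (\<lambda>j. j < Suc k \<and> k = blk C j) (Suc k) in if jj \<le> k then \<phi> (t jj) else 0)) sequentially"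
      by eventually_elim (rule sv_core, blast, simp)
    moreover have "bminr (\<lambda>j. j < Suc k \<and> k = blk C j) (Suc k) = bminr (\<lambda>j. k = blk C j) (Suc k)"
      by (rule bminr_cong) auto
    ultimately show "\<exists>N. \<forall>n\<ge>N. sv \<phi> a n k = svlim \<phi> C t k"
      unfolding svlim_def eventually_sequentially by simp
  qed
  then show ?thesis by blast
qed

lemma blk_ge: "j \<le> blk C j"
  using strict_mono_imp_increasing[OF blk_strict_mono] by blast

lemma svlim_at: "svlim \<phi> C t (blk C j) = \<phi> (t j)"
proof -
  have "(LEAST i. blk C j = blk C i) = j"
    by (rule Least_equality) (auto simp: strict_mono_eq[OF blk_strict_mono] )
  moreover have "\<exists>m<Suc (blk C j). blk C j = blk C m" using blk_ge[of j C] by (intro exI[of _ j]) auto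
  ultimately show ?thesis unfolding svlim_def bminr_eq using blk_ge[of j C] by simp
qed

lemma svlim_off: "k \<notin> range (blk C) \<Longrightarrow> svlim \<phi> C t k = 0"
  unfolding svlim_def bminr_eq by auto




primrec cnt :: "baire \<Rightarrow> nat \<Rightarrow> nat" where
  "cnt p 0 = 0"
| "cnt p (Suc n) = cnt p n + (if 0 < p n then 1 else 0)"

definition pos :: "baire \<Rightarrow> nat \<Rightarrow> nat \<Rightarrow> nat" where
  "pos p n k = bminr (\<lambda>i. 0 < p i \<and> cnt p i = k) n"
definition idx :: "baire \<Rightarrow> nat \<Rightarrow> nat \<Rightarrow> nat" where
  "idx p n j = bmax (\<lambda>i. prod_encode (i, j) < cnt p n) n"
definition ast :: "baire \<Rightarrow> nat \<Rightarrow> nat \<Rightarrow> nat" where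
  "ast p n j = (if prod_encode (idx p n j, j) < cnt p n then p (pos p n (prod_encode (idx p n j, j))) - 1 else 0)"

lemma cnt_mono: "n \<le> n' \<Longrightarrow> cnt p n \<le> cnt p n'"
  by (induction n' rule: dec_induct) auto

lemma cnt_le: "cnt p n \<le> n"
  by (induction n) auto

lemma cnt_wit: "k < cnt p n \<Longrightarrow> \<exists>i<n. 0 < p i \<and> cnt p i = k"
proof (induction n)
  case (Suc n)
  show ?case
  proof (cases "k < cnt p n")
    case True then show ?thesis using Suc.IH by (meson less_SucI)
  next
    case False
    then have "0 < p n" "k = cnt p n" using Suc.prems by (auto split: if_splits)
    then show ?thesis by blast
  qed
qed simp

lemma cnt_uniq_aux: "i < i' \<Longrightarrow> 0 < p i \<Longrightarrow> cnt p i < cnt p i'"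
proof -
  assume "i < i'" "0 < p i"
  then have "cnt p (Suc i) \<le> cnt p i'" by (intro cnt_mono) simp
  then show ?thesis using \<open>0 < p i\<close> by simp
qed

lemma cnt_uniq: "0 < p i \<Longrightarrow> 0 < p i' \<Longrightarrow> cnt p i = cnt p i' \<Longrightarrow> i = i'"
  by (metis cnt_uniq_aux less_irrefl linorder_neqE_nat)

lemma enum_eq:
  assumes S: "infinite S" and h: "strict_mono h" and r: "range h = S"
  shows "enumerate S k = h k"
proof (induction k)
  case 0
  show ?case unfolding enumerate_0
  proof (rule Least_equality)
    show "h 0 \<in> S" using r by auto
    fix y assume "y \<in> S" then obtain m where "y = h m" using r by auto
    then show "h 0 \<le> y" using h by (simp add: strict_mono_less_eq)
  qed
next
  case (Suc k)
  show ?case unfolding enumerate_Suc''[OF S] Suc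
  proof (rule Least_equality)
    show "h (Suc k) \<in> S \<and> h k < h (Suc k)" using r h by (auto simp: strict_mono_less)
    fix y assume "y \<in> S \<and> h k < y"
    then obtain m where "y = h m" "h k < h m" using r by auto
    then show "h (Suc k) \<le> y" using h by (simp add: strict_mono_less strict_mono_less_eq)
  qed
qed

lemma enum_UNIV: "enumerate (UNIV :: nat set) k = k"
  by (rule enum_eq) (auto simp: strict_mono_def)

lemma minus_one_Suc: "minus_one (\<lambda>k. Suc (t k)) = Some t"
  unfolding minus_one_def by (simp add: enum_UNIV)

lemma minus_one_pad:
  assumes h: "strict_mono h" and at: "\<And>j. u (h j) = t j" and off: "\<And>k. k \<notin> range h \<Longrightarrow> u k = 0"
  shows "minus_one u = minus_one t"
proof -
  define T where "T = {j. 0 < t j}"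
  have U: "{k. 0 < u k} = h ` T"
  proof
    show "{k. 0 < u k} \<subseteq> h ` T"
    proof
      fix k assume "k \<in> {k. 0 < u k}"
      then have "k \<in> range h" using off by force
      then obtain j where "k = h j" by auto
      then show "k \<in> h ` T" using \<open>k \<in> {k. 0 < u k}\<close> at unfolding T_def by auto
    qed
    show "h ` T \<subseteq> {k. 0 < u k}" using at unfolding T_def by auto
  qed
  have inj: "inj h" using h by (rule strict_mono_imp_inj_on)
  have fin: "finite (h ` T) = finite T" using inj by (simp add: finite_image_iff inj_on_subset)
  show ?thesis
  proof (cases "finite T")
    case True then show ?thesis unfolding minus_one_def U T_def[symmetric] using fin by simp
  next
    case False
    have e: "enumerate (h ` T) k = h (enumerate T k)" for k
    proof (rule enum_eq)
      show "infinite (h ` T)" using fin False by simp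
      show "strict_mono (\<lambda>k. h (enumerate T k))"
        using h strict_mono_enumerate[OF False] by (simp add: strict_mono_def)
      show "range (\<lambda>k. h (enumerate T k)) = h ` T"
        using range_enumerate[OF False] by (metis image_image)
    qed
    show ?thesis unfolding minus_one_def U T_def[symmetric] using fin False by (simp add: e at)
  qed
qed

lemma cnt_card: "cnt p n = card {i. i < n \<and> 0 < p i}"
proof (induction n)
  case (Suc n)
  have "{i. i < Suc n \<and> 0 < p i} = {i. i < n \<and> 0 < p i} \<union> (if 0 < p n then {n} else {})"
    by (auto simp: less_Suc_eq)
  then show ?case using Suc by (simp add: card_insert_if)
qed simp

lemma cnt_enum:
  assumes S: "infinite {i. 0 < p i}"
  shows "cnt p (enumerate {i. 0 < p i} k) = k"
proof -
  let ?S = "{i. 0 < p i}"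
  have "{i. i < enumerate ?S k \<and> 0 < p i} = enumerate ?S ` {..<k}"
  proof
    show "{i. i < enumerate ?S k \<and> 0 < p i} \<subseteq> enumerate ?S ` {..<k}"
    proof
      fix i assume i: "i \<in> {i. i < enumerate ?S k \<and> 0 < p i}"
      then have "i \<in> range (enumerate ?S)" using range_enumerate[OF S] by auto
      then obtain m where m: "i = enumerate ?S m" by auto
      then have "m < k" using i S by simp
      then show "i \<in> enumerate ?S ` {..<k}" using m by auto
    qed
    show "enumerate ?S ` {..<k} \<subseteq> {i. i < enumerate ?S k \<and> 0 < p i}"
      using S enumerate_in_set[OF S] by auto
  qed
  moreover have "inj_on (enumerate ?S) {..<k}" using inj_enumerate[OF S] by (simp add: inj_on_def)
  ultimately show ?thesis unfolding cnt_card by (simp add: card_image)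
qed

lemma pos_enum:
  assumes S: "infinite {i. 0 < p i}" and k: "k < cnt p n"
  shows "pos p n k = enumerate {i. 0 < p i} k"
proof -
  obtain i where i: "i < n" "0 < p i" "cnt p i = k" using cnt_wit[OF k] by blast
  have en: "0 < p (enumerate {i. 0 < p i} k)" using enumerate_in_set[OF S] by simp
  have "(LEAST i. 0 < p i \<and> cnt p i = k) = enumerate {i. 0 < p i} k"
    by (rule Least_equality) (use en cnt_enum[OF S] cnt_uniq in \<open>auto simp: eq_imp_le\<close>)
  then show ?thesis unfolding pos_def bminr_eq using i by auto
qed

lemma pe_ge: "i \<le> prod_encode (i, j)"
  unfolding prod_encode_def by simp

lemma ast_conv:
  assumes S: "infinite {i. 0 < p i}" and lc: "lim_conv (\<lambda>k. p (enumerate {i. 0 < p i} k) - 1) t"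
  shows "\<exists>N. \<forall>n\<ge>N. ast p n j = t j"
proof -
  let ?S = "{i. 0 < p i}"
  obtain N0 where N0: "\<forall>i\<ge>N0. p (enumerate ?S (prod_encode (i, j))) - 1 = t j"
    using lc unfolding lim_conv_def by blast
  define K0 where "K0 = prod_encode (N0, j)"
  define n0 where "n0 = Suc (enumerate ?S K0)"
  have c0: "K0 < cnt p n0" unfolding n0_def using cnt_enum[OF S, of K0] enumerate_in_set[OF S, of K0] by simp
  have "ast p n j = t j" if n: "n0 \<le> n" for n
  proof -
    have cn: "K0 < cnt p n" using c0 cnt_mono[OF n, of p] by simp
    have "N0 \<le> n" using cn cnt_le[of p n] pe_ge[of N0 j] unfolding K0_def by simp
    define Q where "Q = (\<lambda>i. prod_encode (i, j) < cnt p n)"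
    have QN0: "Q N0" unfolding Q_def using cn K0_def by simp
    have i1: "N0 \<le> idx p n j" unfolding idx_def Q_def[symmetric] by (rule bmax_ge[of N0 n Q, OF \<open>N0 \<le> n\<close> QN0])
    have i2: "Q (idx p n j)" unfolding idx_def Q_def[symmetric] by (rule bmax_Q[of N0 n Q, OF \<open>N0 \<le> n\<close> QN0])
    then have "ast p n j = p (enumerate ?S (prod_encode (idx p n j, j))) - 1"
      unfolding ast_def using pos_enum[OF S] by (simp add: Q_def)
    also have "\<dots> = t j" using N0 i1 by blast
    finally show ?thesis .
  qed
  then show ?thesis by blast
qed




lemma rcP_pos: "rc k F \<Longrightarrow> rcP k (\<lambda>p xs. 0 < F p xs)"
  by (rule rcP_cong[OF rcP_less[OF rc_zero]]) auto

lemma rc_cnt1: "rc 1 (\<lambda>p xs. cnt p (xs!0))"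
proof -
  define G where "G = (\<lambda>(p::baire) (zs::nat list). zs!1 + (if 0 < p (zs!0) then 1 else 0))"
  have "rc 2 G" unfolding G_def
    by (intro rc_add rc_proj rc_if rcP_pos rc_orac rc_const) auto
  then have R: "rc 1 (\<lambda>p xs. prec (\<lambda>ys. 0) (G p) (hd xs) (tl xs))"
    using rc_prec[OF rc_zero[of 0], of G] by (simp add: numeral_2_eq_2)
  have E: "prec (\<lambda>ys. 0) (G p) n ys = cnt p n" for p n ys
    by (induction n) (auto simp: G_def)
  show ?thesis by (rule rc_cong[OF R]) (auto simp: E length_Suc_conv)
qed

lemma rc_cnt: "rc k F \<Longrightarrow> rc k (\<lambda>p xs. cnt p (F p xs))"
  using rc_comp1[OF rc_cnt1] by simp

lemma rc_pos: assumes "rc k N" "rc k K" shows "rc k (\<lambda>p xs. pos p (N p xs) (K p xs))"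
proof -
  have P: "rcP (Suc 1) (\<lambda>p xs. 0 < p (xs!0) \<and> cnt p (xs!0) = xs!1)"
    by (intro rcP_conj rcP_pos rc_orac rc_proj rcP_eq rc_cnt) auto
  have "rc 2 (\<lambda>p xs. bminr (\<lambda>m. 0 < p m \<and> cnt p m = tl xs ! 0) (xs!0))"
    using rc_bminr[OF P] by (simp add: numeral_2_eq_2)
  then have "rc 2 (\<lambda>p xs. pos p (xs!0) (xs!1))"
    by (rule rc_cong) (auto simp: pos_def length_Suc_conv numeral_2_eq_2)
  from rc_comp2[OF this assms] show ?thesis by simp
qed

lemma rc_idx: assumes "rc k N" "rc k J" shows "rc k (\<lambda>p xs. idx p (N p xs) (J p xs))"
proof -
  have P: "rcP (Suc 2) (\<lambda>p xs. prod_encode (xs!0, xs!1) < cnt p (xs!2))"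
    by (intro rcP_less rc_pe rc_proj rc_cnt) auto
  have "rc 3 (\<lambda>p xs. bmax (\<lambda>m. prod_encode (m, tl xs ! 0) < cnt p (tl xs ! 1)) (xs!0))"
    using rc_bmax[OF P] by (simp add: numeral_3_eq_3)
  then have "rc 3 (\<lambda>p xs. bmax (\<lambda>m. prod_encode (m, xs!1) < cnt p (xs!2)) (xs!0))"
    by (rule rc_cong) (auto simp: length_Suc_conv numeral_3_eq_3)
  from rc_comp3[OF this assms(1) assms(2) assms(1)] show ?thesis by (simp add: idx_def)
qed

lemma rc_ast: assumes "rc k N" "rc k J" shows "rc k (\<lambda>p xs. ast p (N p xs) (J p xs))"
  unfolding ast_def
  by (intro rc_if rcP_less rc_pe rc_idx assms rc_cnt rc_pred rc_orac rc_pos rc_zero)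

lemma rc_chg:
  assumes a: "rc 2 (\<lambda>p xs. a p (xs!0) (xs!1))"
  shows "rc 2 (\<lambda>p xs. chg (a p) (xs!0) (xs!1))"
proof -
  define G where "G = (\<lambda>(p::baire) (zs::nat list). zs!1 + (if a p (Suc (zs!0)) (zs!2) = a p (zs!0) (zs!2) then 0 else 1))"
  have a': "rc 3 (\<lambda>p zs. a p (F p zs) (zs!2))" if "rc 3 F" for F
    using rc_comp2[OF a that rc_proj[of 2 3]] by simp
  have "rc 3 G" unfolding G_def
    by (intro rc_add rc_proj rc_if rcP_eq a' rc_succ rc_const) auto
  then have R: "rc 2 (\<lambda>p xs. prec (\<lambda>ys. 0) (G p) (hd xs) (tl xs))"
    using rc_prec[OF rc_zero[of 1], of G] by (simp add: numeral_2_eq_2 numeral_3_eq_3)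
  have E: "prec (\<lambda>ys. 0) (G p) n [j] = chg (a p) n j" for p n j
    by (induction n) (auto simp: G_def)
  show ?thesis by (rule rc_cong[OF R]) (auto simp: E length_Suc_conv numeral_2_eq_2)
qed

lemma rc_offs:
  assumes c: "rc 2 (\<lambda>p xs. c p (xs!0) (xs!1))"
  shows "rc 2 (\<lambda>p xs. offs (c p (xs!0)) (xs!1))"
proof -
  define G where "G = (\<lambda>(p::baire) (zs::nat list). zs!1 + c p (zs!2) (zs!0) + 1)"
  have "rc 3 G" unfolding G_def
    by (intro rc_add rc_proj rc_const rc_comp2[OF c, simplified]) auto
  then have R: "rc 2 (\<lambda>p xs. prec (\<lambda>ys. 0) (G p) (hd xs) (tl xs))"
    using rc_prec[OF rc_zero[of 1], of G] by (simp add: numeral_2_eq_2 numeral_3_eq_3)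
  have E: "prec (\<lambda>ys. 0) (G p) j [n] = offs (c p n) j" for p n j
    by (induction j) (auto simp: G_def)
  have "rc 2 (\<lambda>p xs. offs (c p (xs!1)) (xs!0))"
    by (rule rc_cong[OF R]) (auto simp: E length_Suc_conv numeral_2_eq_2)
  from rc_comp2[OF this rc_proj[of 1 2] rc_proj[of 0 2]] show ?thesis by simp
qed

lemma rc_sv:
  assumes a: "rc 2 (\<lambda>p xs. a p (xs!0) (xs!1))" and phi: "rc 1 (\<lambda>p xs. \<phi> (xs!0))"
  shows "rc 2 (\<lambda>p xs. sv \<phi> (a p) (xs!0) (xs!1))"
proof -
  have ch: "rc 2 (\<lambda>p xs. chg (a p) (xs!0) (xs!1))" by (rule rc_chg[OF a])
  have of: "rc 2 (\<lambda>p xs. offs (chg (a p) (xs!0)) (xs!1))" by (rule rc_offs[OF ch])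
  have bl3: "rc (Suc 2) (\<lambda>p xs. blk (chg (a p) (xs!2)) (xs!0))"
  proof -
    have o3: "rc (Suc 2) (\<lambda>p xs. offs (chg (a p) (xs!2)) (xs!0))"
      using rc_comp2[OF of rc_proj[of 2 "Suc 2"] rc_proj[of 0 "Suc 2"]] by simp
    have c3: "rc (Suc 2) (\<lambda>p xs. chg (a p) (xs!2) (xs!0))"
      using rc_comp2[OF ch rc_proj[of 2 "Suc 2"] rc_proj[of 0 "Suc 2"]] by simp
    show ?thesis unfolding blk_def by (rule rc_add[OF o3 c3])
  qed
  have P: "rcP (Suc 2) (\<lambda>p xs. xs!1 = blk (chg (a p) (xs!2)) (xs!0))"
    by (intro rcP_eq rc_proj bl3) auto
  have "rc 3 (\<lambda>p xs. bminr (\<lambda>m. tl xs ! 0 = blk (chg (a p) (tl xs ! 1)) m) (xs!0))"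
    using rc_bminr[OF P] by (simp add: numeral_3_eq_3)
  then have B3: "rc 3 (\<lambda>p xs. bminr (\<lambda>m. xs!1 = blk (chg (a p) (xs!2)) m) (xs!0))"
    by (rule rc_cong) (auto simp: length_Suc_conv numeral_3_eq_3)
  have B: "rc 2 (\<lambda>p xs. bminr (\<lambda>m. xs!1 = blk (chg (a p) (xs!0)) m) (Suc (xs!1)))"
    using rc_comp3[OF B3 rc_succ[OF rc_proj[of 1 2]] rc_proj[of 1 2] rc_proj[of 0 2]] by simp
  have "rc 2 (\<lambda>p xs. if bminr (\<lambda>m. xs!1 = blk (chg (a p) (xs!0)) m) (Suc (xs!1)) \<le> xs!1
          then \<phi> (a p (xs!0) (bminr (\<lambda>m. xs!1 = blk (chg (a p) (xs!0)) m) (Suc (xs!1)))) else 0)"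
    by (intro rc_if rcP_le B rc_proj rc_zero rc_comp1[OF phi, simplified] rc_comp2[OF a, simplified]) auto
  then show ?thesis unfolding sv_def Let_def by simp
qed

definition KB :: "(nat \<Rightarrow> nat) \<Rightarrow> baire \<Rightarrow> nat list \<Rightarrow> nat" where
  "KB \<phi> p xs = sv \<phi> (ast p) (fst (prod_decode (xs!0))) (snd (prod_decode (xs!0)))"

lemma rc_KB: assumes phi: "rc 1 (\<lambda>p xs. \<phi> (xs!0))" shows "rc 1 (KB \<phi>)"
proof -
  have "rc 2 (\<lambda>p xs. ast p (xs!0) (xs!1))" by (intro rc_ast rc_proj) auto
  from rc_sv[OF this phi] have "rc 2 (\<lambda>p xs. sv \<phi> (ast p) (xs!0) (xs!1))" .
  from rc_comp2[OF this rc_fst_pd[OF rc_proj[of 0 1]] rc_snd_pd[OF rc_proj[of 0 1]]]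
  show ?thesis unfolding KB_def by simp
qed




lemma computable_minus_one: "computable minus_one"
proof -
  have P: "rcP 2 (\<lambda>p xs. 0 < p (xs!0) \<and> cnt p (xs!0) = xs!1)"
    by (intro rcP_conj rcP_pos rc_orac rc_proj rcP_eq rc_cnt) auto
  then have "rc 2 (\<lambda>p xs. 1 - (if 0 < p (xs!0) \<and> cnt p (xs!0) = xs!1 then 1 else 0))"
    unfolding rcP_def by (intro rc_sub rc_const)
  then have "rc 2 (\<lambda>p xs. if 0 < p (xs!0) \<and> cnt p (xs!0) = xs!1 then 0 else 1)"
    by (rule rc_cong) auto
  then obtain eP where eP: "\<forall>p xs. length xs = 2 \<longrightarrow> ev p eP xs (if 0 < p (xs!0) \<and> cnt p (xs!0) = xs!1 then 0 else 1)"
    unfolding rc_def by blast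
  have "rc 1 (\<lambda>p xs. p (xs!0) - 1)" by (intro rc_pred rc_orac rc_proj) auto
  then obtain e2 where e2: "\<forall>p xs. length xs = 1 \<longrightarrow> ev p e2 xs (p (xs!0) - 1)"
    unfolding rc_def by blast
  show ?thesis unfolding computable_def
  proof (intro exI[of _ "Comp e2 [Mu eP]"] allI impI)
    fix p q n assume m: "minus_one p = Some q"
    let ?S = "{i. 0 < p i}"
    have S: "infinite ?S" and q: "q = (\<lambda>k. p (enumerate ?S k) - 1)"
      using m unfolding minus_one_def by (auto split: if_splits)
    let ?m = "enumerate ?S n"
    have w: "0 < p ?m" "cnt p ?m = n" using enumerate_in_set[OF S, of n] cnt_enum[OF S, of n] by auto
    have mu: "ev p (Mu eP) [n] ?m"
    proof (rule ev_mu)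
      show "ev p eP [?m, n] 0" using eP[rule_format, of "[?m, n]" p] w by simp
      show "\<forall>m<?m. \<exists>y. ev p eP [m, n] (Suc y)"
      proof (intro allI impI exI)
        fix m assume "m < ?m"
        have "\<not> (0 < p m \<and> cnt p m = n)"
        proof
          assume "0 < p m \<and> cnt p m = n"
          then have "m = ?m" using cnt_uniq w by metis
          then show False using \<open>m < ?m\<close> by simp
        qed
        then have "(if 0 < p m \<and> cnt p m = n then 0 else 1) = Suc 0" by simp
        then show "ev p eP [m, n] (Suc 0)" using eP[rule_format, of "[m, n]" p] by simp
      qed
    qed
    show "ev p (Comp e2 [Mu eP]) [n] (q n)"
      by (rule ev_comp[where ys="[?m]"]) (use mu e2[rule_format, of "[?m]" p] q in auto)
  qed
qed

lemma computable_id: "computable (\<lambda>p. Some p)"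
  unfolding computable_def by (auto intro: ev_orac[where xs="[]", simplified])

lemma computable_suc: "computable (\<lambda>p. Some (\<lambda>n. Suc (p n)))"
proof -
  have "rc 1 (\<lambda>p xs. Suc (p (xs!0)))" by (intro rc_succ rc_orac rc_proj) auto
  from computable_rc[OF this] show ?thesis by simp
qed

lemma computable_pred: "computable (\<lambda>p. Some (\<lambda>n. p n - 1))"
proof -
  have "rc 1 (\<lambda>p xs. p (xs!0) - 1)" by (intro rc_pred rc_orac rc_proj) auto
  from computable_rc[OF this] show ?thesis by simp
qed

lemma KB_lim:
  "\<exists>u. lim_conv (\<lambda>m. KB \<phi> p [m]) u \<and>
     (\<forall>r t. minus_one p = Some r \<longrightarrow> lim_conv r t \<longrightarrow> (\<exists>C. u = svlim \<phi> C t))"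
proof -
  have "\<forall>k. \<exists>v N. \<forall>n\<ge>N. sv \<phi> (ast p) n k = v" using sv_conv by blast
  then obtain u where u: "\<forall>k. \<exists>N. \<forall>n\<ge>N. sv \<phi> (ast p) n k = u k" by metis
  have lc: "lim_conv (\<lambda>m. KB \<phi> p [m]) u" unfolding lim_conv_def KB_def using u by simp
  have "\<exists>C. u = svlim \<phi> C t" if m: "minus_one p = Some r" and rt: "lim_conv r t" for r t
  proof -
    let ?S = "{i. 0 < p i}"
    have S: "infinite ?S" and r: "r = (\<lambda>k. p (enumerate ?S k) - 1)"
      using m unfolding minus_one_def by (auto split: if_splits)
    have "\<forall>j. \<exists>N. \<forall>n\<ge>N. ast p n j = t j" using ast_conv[OF S] rt r by blast
    from sv_conv_lim[OF this] obtain C where C: "\<forall>k. \<exists>N. \<forall>n\<ge>N. sv \<phi> (ast p) n k = svlim \<phi> C t k"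
      by blast
    have "lim_conv (\<lambda>m. KB \<phi> p [m]) (svlim \<phi> C t)" unfolding lim_conv_def KB_def using C by simp
    then show ?thesis using lim_conv_unique[OF lc] by blast
  qed
  then show ?thesis using lc by blast
qed

lemma minus_one_svlim: "minus_one (svlim \<phi> C t) = minus_one (\<lambda>j. \<phi> (t j))"
  by (rule minus_one_pad[OF blk_strict_mono[of C]]) (auto simp: svlim_at svlim_off)

lemma compl_rep_eq: "compl_rep \<delta> p = Some (Option.bind (minus_one p) \<delta>)"
  unfolding compl_rep_def by (auto split: option.splits)

lemma compl_prob_ne: "compl_prob f z \<noteq> {}"
  unfolding compl_prob_def by (auto split: option.splits)

lemma compl_prob_Some: "compl_prob f (Some a) = (if f a \<noteq> {} then Some ` f a else UNIV)"
  unfolding compl_prob_def by simp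

lemma jump_rep_eq: "lim_conv w u \<Longrightarrow> jump_rep \<delta> w = \<delta> u"
  unfolding jump_rep_def by (simp add: baire_lim_eq)

lemma jump_rep_Some: "jump_rep \<delta> w = Some x \<Longrightarrow> \<exists>u. lim_conv w u \<and> \<delta> u = Some x"
  unfolding jump_rep_def by (cases "baire_lim w") (auto dest: baire_lim_Some)




lemma compl_rep_SomeE: "compl_rep \<delta> p = Some (Some a) \<Longrightarrow> \<exists>r. minus_one p = Some r \<and> \<delta> r = Some a"
  by (simp add: compl_rep_eq bind_eq_Some_conv)

lemma R1: "sW_le (compl_rep (jump_rep \<delta>X)) (compl_rep \<delta>Y) (compl_prob f)
               (jump_rep (compl_rep \<delta>X)) (compl_rep \<delta>Y) (compl_prob f)"
  unfolding sW_le_def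
proof (intro exI conjI allI impI)
  show "computable (\<lambda>p. Some p)" by (rule computable_id)
  show "computable (\<lambda>p. Some (\<lambda>m. KB Suc p [m]))"
    by (rule computable_rc[OF rc_KB]) (intro rc_succ rc_proj, simp)
  fix G assume G: "realizes (jump_rep (compl_rep \<delta>X)) (compl_rep \<delta>Y) (compl_prob f) G"
  show "realizes (compl_rep (jump_rep \<delta>X)) (compl_rep \<delta>Y) (compl_prob f)
          (\<lambda>p. Option.bind (Option.bind (Some (\<lambda>m. KB Suc p [m])) G) (\<lambda>p. Some p))"
    unfolding realizes_def
  proof (intro allI impI)
    fix p x assume px: "compl_rep (jump_rep \<delta>X) p = Some x \<and> compl_prob f x \<noteq> {}"
    obtain u where lc: "lim_conv (\<lambda>m. KB Suc p [m]) u"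
      and uu: "\<forall>r t. minus_one p = Some r \<longrightarrow> lim_conv r t \<longrightarrow> (\<exists>C. u = svlim Suc C t)"
      using KB_lim[of Suc p] by (elim exE conjE)
    define z where "z = Option.bind (minus_one u) \<delta>X"
    have jz: "jump_rep (compl_rep \<delta>X) (\<lambda>m. KB Suc p [m]) = Some z"
      by (simp add: jump_rep_eq[OF lc] compl_rep_eq z_def)
    have zx: "z = x" if xS: "x = Some a" for a
    proof -
      obtain r where r: "minus_one p = Some r" "jump_rep \<delta>X r = Some a"
        using compl_rep_SomeE[OF px[THEN conjunct1, unfolded xS]] by blast
      obtain t where t: "lim_conv r t" "\<delta>X t = Some a" using jump_rep_Some[OF r(2)] by blast
      obtain C where "u = svlim Suc C t" using uu r t by blast
      then have "minus_one u = Some t" by (simp add: minus_one_svlim minus_one_Suc)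
      then show ?thesis using t xS by (simp add: z_def)
    qed
    obtain q y where q: "G (\<lambda>m. KB Suc p [m]) = Some q" "compl_rep \<delta>Y q = Some y" "y \<in> compl_prob f z"
      using G[unfolded realizes_def, rule_format, OF conjI[OF jz compl_prob_ne]] by blast
    have "y \<in> compl_prob f x"
    proof (cases x)
      case None then show ?thesis by (simp add: compl_prob_def)
    next
      case (Some a) then show ?thesis using zx q by simp
    qed
    then show "\<exists>q y. Option.bind (Option.bind (Some (\<lambda>m. KB Suc p [m])) G) (\<lambda>p. Some p) = Some q \<and>
                compl_rep \<delta>Y q = Some y \<and> y \<in> compl_prob f x"
      using q by auto
  qed
qed

lemma R2a: "sW_le (jump_rep (compl_rep \<delta>X)) (compl_rep \<delta>Y) (compl_prob f)
                  (compl_rep (jump_rep (compl_rep \<delta>X))) (compl_rep (compl_rep \<delta>Y)) (compl_prob (compl_prob f))"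
  unfolding sW_le_def
proof (intro exI conjI allI impI)
  show "computable (\<lambda>p. Some (\<lambda>n. p n - 1))" by (rule computable_pred)
  show "computable (\<lambda>p. Some (\<lambda>n. Suc (p n)))" by (rule computable_suc)
  fix G assume G: "realizes (compl_rep (jump_rep (compl_rep \<delta>X))) (compl_rep (compl_rep \<delta>Y)) (compl_prob (compl_prob f)) G"
  show "realizes (jump_rep (compl_rep \<delta>X)) (compl_rep \<delta>Y) (compl_prob f)
          (\<lambda>p. Option.bind (Option.bind (Some (\<lambda>n. Suc (p n))) G) (\<lambda>p. Some (\<lambda>n. p n - 1)))"
    unfolding realizes_def
  proof (intro allI impI)
    fix p z assume pz: "jump_rep (compl_rep \<delta>X) p = Some z \<and> compl_prob f z \<noteq> {}"
    have in1: "compl_rep (jump_rep (compl_rep \<delta>X)) (\<lambda>n. Suc (p n)) = Some (Some z)"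
      using pz by (simp add: compl_rep_eq minus_one_Suc)
    obtain q y' where q: "G (\<lambda>n. Suc (p n)) = Some q" "compl_rep (compl_rep \<delta>Y) q = Some y'"
       "y' \<in> compl_prob (compl_prob f) (Some z)"
      using G[unfolded realizes_def, rule_format, OF conjI[OF in1 compl_prob_ne]] by blast
    obtain y where y: "y' = Some y" "y \<in> compl_prob f z"
      using q(3) compl_prob_ne[of f z] by (auto simp: compl_prob_Some)
    obtain r where r: "minus_one q = Some r" "compl_rep \<delta>Y r = Some y"
      using compl_rep_SomeE[OF q(2)[unfolded y(1)]] by blast
    let ?S = "{i. 0 < q i}"
    have S: "infinite ?S" and rr: "r = (\<lambda>k. q (enumerate ?S k) - 1)"
      using r(1) unfolding minus_one_def by (auto split: if_splits)
    have "minus_one (\<lambda>n. q n - 1) = minus_one r"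
    proof (rule minus_one_pad[OF strict_mono_enumerate[OF S]])
      show "q (enumerate ?S j) - 1 = r j" for j using rr by simp
      fix k assume "k \<notin> range (enumerate ?S)"
      then have "k \<notin> ?S" using range_enumerate[OF S] by simp
      then show "q k - 1 = 0" by simp
    qed
    then have "compl_rep \<delta>Y (\<lambda>n. q n - 1) = Some y" using r by (simp add: compl_rep_eq)
    then show "\<exists>q' y. Option.bind (Option.bind (Some (\<lambda>n. Suc (p n))) G) (\<lambda>p. Some (\<lambda>n. p n - 1)) = Some q' \<and>
                compl_rep \<delta>Y q' = Some y \<and> y \<in> compl_prob f z"
      using q(1) y(2) by auto
  qed
qed

lemma R2b: "sW_le (compl_rep (jump_rep (compl_rep \<delta>X))) (compl_rep (compl_rep \<delta>Y)) (compl_prob (compl_prob f))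
                  (jump_rep (compl_rep \<delta>X)) (compl_rep \<delta>Y) (compl_prob f)"
  unfolding sW_le_def
proof (intro exI conjI allI impI)
  show "computable (\<lambda>p. Some (\<lambda>n. Suc (p n)))" by (rule computable_suc)
  show "computable (\<lambda>p. Some (\<lambda>m. KB id p [m]))"
    by (rule computable_rc[OF rc_KB]) (simp add: rc_proj)
  fix G assume G: "realizes (jump_rep (compl_rep \<delta>X)) (compl_rep \<delta>Y) (compl_prob f) G"
  show "realizes (compl_rep (jump_rep (compl_rep \<delta>X))) (compl_rep (compl_rep \<delta>Y)) (compl_prob (compl_prob f))
          (\<lambda>p. Option.bind (Option.bind (Some (\<lambda>m. KB id p [m])) G) (\<lambda>p. Some (\<lambda>n. Suc (p n))))"
    unfolding realizes_def
  proof (intro allI impI)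
    fix p x assume px: "compl_rep (jump_rep (compl_rep \<delta>X)) p = Some x \<and> compl_prob (compl_prob f) x \<noteq> {}"
    obtain u where lc: "lim_conv (\<lambda>m. KB id p [m]) u"
      and uu: "\<forall>r t. minus_one p = Some r \<longrightarrow> lim_conv r t \<longrightarrow> (\<exists>C. u = svlim id C t)"
      using KB_lim[of id p] by (elim exE conjE)
    define z where "z = Option.bind (minus_one u) \<delta>X"
    have jz: "jump_rep (compl_rep \<delta>X) (\<lambda>m. KB id p [m]) = Some z"
      by (simp add: jump_rep_eq[OF lc] compl_rep_eq z_def)
    have zx: "z = a" if xS: "x = Some a" for a
    proof -
      obtain r where r: "minus_one p = Some r" "jump_rep (compl_rep \<delta>X) r = Some a"
        using compl_rep_SomeE[OF px[THEN conjunct1, unfolded xS]] by blast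
      obtain t where t: "lim_conv r t" "compl_rep \<delta>X t = Some a" using jump_rep_Some[OF r(2)] by blast
      obtain C where "u = svlim id C t" using uu r t by blast
      then have "minus_one u = minus_one t" by (simp add: minus_one_svlim)
      then show ?thesis using t xS by (simp add: z_def compl_rep_eq)
    qed
    obtain q y where q: "G (\<lambda>m. KB id p [m]) = Some q" "compl_rep \<delta>Y q = Some y" "y \<in> compl_prob f z"
      using G[unfolded realizes_def, rule_format, OF conjI[OF jz compl_prob_ne]] by blast
    have out: "compl_rep (compl_rep \<delta>Y) (\<lambda>n. Suc (q n)) = Some (Some y)"
      using q(2) by (simp add: compl_rep_eq minus_one_Suc)
    have "Some y \<in> compl_prob (compl_prob f) x"
    proof (cases x)
      case None then show ?thesis by (simp add: compl_prob_def)
    next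
      case (Some a) then show ?thesis using zx q(3) compl_prob_ne[of f a] by (simp add: compl_prob_Some)
    qed
    then show "\<exists>q y. Option.bind (Option.bind (Some (\<lambda>m. KB id p [m])) G) (\<lambda>p. Some (\<lambda>n. Suc (p n))) = Some q \<and>
                compl_rep (compl_rep \<delta>Y) q = Some y \<and> y \<in> compl_prob (compl_prob f) x"
      using q(1) out by auto
  qed
qed

lemma R3a: "sW_le (jump_rep \<delta>X) \<delta>Y f (compl_rep (jump_rep \<delta>X)) (compl_rep \<delta>Y) (compl_prob f)"
  unfolding sW_le_def
proof (intro exI conjI allI impI)
  show "computable minus_one" by (rule computable_minus_one)
  show "computable (\<lambda>p. Some (\<lambda>n. Suc (p n)))" by (rule computable_suc)
  fix G assume G: "realizes (compl_rep (jump_rep \<delta>X)) (compl_rep \<delta>Y) (compl_prob f) G"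
  show "realizes (jump_rep \<delta>X) \<delta>Y f (\<lambda>p. Option.bind (Option.bind (Some (\<lambda>n. Suc (p n))) G) minus_one)"
    unfolding realizes_def
  proof (intro allI impI)
    fix p x assume px: "jump_rep \<delta>X p = Some x \<and> f x \<noteq> {}"
    have in1: "compl_rep (jump_rep \<delta>X) (\<lambda>n. Suc (p n)) = Some (Some x)"
      using px by (simp add: compl_rep_eq minus_one_Suc)
    obtain q y' where q: "G (\<lambda>n. Suc (p n)) = Some q" "compl_rep \<delta>Y q = Some y'"
       "y' \<in> compl_prob f (Some x)"
      using G[unfolded realizes_def, rule_format, OF conjI[OF in1 compl_prob_ne]] by blast
    obtain y where y: "y' = Some y" "y \<in> f x" using q(3) px by (auto simp: compl_prob_Some)
    obtain r where r: "minus_one q = Some r" "\<delta>Y r = Some y"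
      using compl_rep_SomeE[OF q(2)[unfolded y(1)]] by blast
    show "\<exists>q y. Option.bind (Option.bind (Some (\<lambda>n. Suc (p n))) G) minus_one = Some q \<and> \<delta>Y q = Some y \<and> y \<in> f x"
      using q(1) r y(2) by auto
  qed
qed

lemma R3b:
  assumes Y: "represented \<delta>Y"
    and hyp: "sW_le (compl_rep \<delta>X) (compl_rep \<delta>Y) (compl_prob f) \<delta>X \<delta>Y f"
  shows "sW_le (compl_rep (jump_rep \<delta>X)) (compl_rep \<delta>Y) (compl_prob f) (jump_rep \<delta>X) \<delta>Y f"
proof -
  obtain H1 K1 where H1: "computable H1" and K1: "computable K1"
    and red: "\<And>G. realizes \<delta>X \<delta>Y f G \<Longrightarrow>
        realizes (compl_rep \<delta>X) (compl_rep \<delta>Y) (compl_prob f) (\<lambda>p. Option.bind (Option.bind (K1 p) G) H1)"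
    using hyp unfolding sW_le_def by blast
  obtain e1 where e1: "\<forall>p q. K1 p = Some q \<longrightarrow> (\<forall>n. ev p e1 [n] (q n))"
    using K1 unfolding computable_def by blast
  define G0 where "G0 = (\<lambda>r. if \<exists>a. \<delta>X r = Some a \<and> f a \<noteq> {}
      then Some (SOME q. \<exists>y. \<delta>Y q = Some y \<and> y \<in> f (the (\<delta>X r))) else None)"
  have G0: "realizes \<delta>X \<delta>Y f G0"
    unfolding realizes_def
  proof (intro allI impI)
    fix r a assume ra: "\<delta>X r = Some a \<and> f a \<noteq> {}"
    then obtain y where "y \<in> f a" by blast
    moreover obtain q where "\<delta>Y q = Some y" using Y unfolding represented_def by blast
    ultimately have "\<exists>q. \<exists>y. \<delta>Y q = Some y \<and> y \<in> f a" by blast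
    then have "\<exists>y. \<delta>Y (SOME q. \<exists>y. \<delta>Y q = Some y \<and> y \<in> f a) = Some y \<and> y \<in> f a" by (rule someI_ex)
    then show "\<exists>q y. G0 r = Some q \<and> \<delta>Y q = Some y \<and> y \<in> f a" using ra by (auto simp: G0_def)
  qed
  define K where "K = (\<lambda>p. Some (\<lambda>m. LiftF e1 (\<lambda>m'. KB Suc p [m']) [m]))"
  have Kc: "computable K"
  proof -
    have "rc 1 (\<lambda>p xs. LiftF e1 (\<lambda>m. KB Suc p [m]) xs)"
      by (rule rc_subst[OF rc_LiftF rc_KB]) (intro rc_succ rc_proj, simp)
    from computable_rc[OF this] show ?thesis unfolding K_def by simp
  qed
  show ?thesis unfolding sW_le_def
  proof (intro exI conjI allI impI)
    show "computable H1" by (rule H1)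
    show "computable K" by (rule Kc)
    fix G assume G: "realizes (jump_rep \<delta>X) \<delta>Y f G"
    show "realizes (compl_rep (jump_rep \<delta>X)) (compl_rep \<delta>Y) (compl_prob f) (\<lambda>p. Option.bind (Option.bind (K p) G) H1)"
      unfolding realizes_def
    proof (intro allI impI)
      fix p x assume px: "compl_rep (jump_rep \<delta>X) p = Some x \<and> compl_prob f x \<noteq> {}"
      obtain u where lc: "lim_conv (\<lambda>m. KB Suc p [m]) u"
        and uu: "\<forall>r t. minus_one p = Some r \<longrightarrow> lim_conv r t \<longrightarrow> (\<exists>C. u = svlim Suc C t)"
        using KB_lim[of Suc p] by (elim exE conjE)
      define zz where "zz = Option.bind (minus_one u) \<delta>X"
      have cu: "compl_rep \<delta>X u = Some zz" by (simp add: compl_rep_eq zz_def)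
      have zx: "zz = x" if xS: "x = Some a" for a
      proof -
        obtain r where r: "minus_one p = Some r" "jump_rep \<delta>X r = Some a"
          using compl_rep_SomeE[OF px[THEN conjunct1, unfolded xS]] by blast
        obtain t where t: "lim_conv r t" "\<delta>X t = Some a" using jump_rep_Some[OF r(2)] by blast
        obtain C where "u = svlim Suc C t" using uu r t by blast
        then have "minus_one u = Some t" by (simp add: minus_one_svlim minus_one_Suc)
        then show ?thesis using t xS by (simp add: zz_def)
      qed
      obtain q' y' where "Option.bind (Option.bind (K1 u) G0) H1 = Some q'"
        using red[OF G0, unfolded realizes_def, rule_format, OF conjI[OF cu compl_prob_ne]] by blast
      then obtain v where v: "K1 u = Some v" and G0v: "G0 v \<noteq> None"
        by (cases "K1 u"; cases "G0 (the (K1 u))") auto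
      obtain b where b: "\<delta>X v = Some b" "f b \<noteq> {}" using G0v by (auto simp: G0_def split: if_splits)
      have lw: "lim_conv (\<lambda>m. LiftF e1 (\<lambda>m'. KB Suc p [m']) [m]) v"
        by (rule LiftF_conv[OF _ lc]) (use e1 v in blast)
      have jw: "jump_rep \<delta>X (\<lambda>m. LiftF e1 (\<lambda>m'. KB Suc p [m']) [m]) = Some b"
        using jump_rep_eq[OF lw, of \<delta>X] b(1) by simp
      obtain q0 y0 where q0: "G (\<lambda>m. LiftF e1 (\<lambda>m'. KB Suc p [m']) [m]) = Some q0" "\<delta>Y q0 = Some y0" "y0 \<in> f b"
        using G[unfolded realizes_def, rule_format, OF conjI[OF jw b(2)]] by blast
      define G' where "G' = (\<lambda>r. if r = v then Some q0 else G0 r)"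
      have G': "realizes \<delta>X \<delta>Y f G'"
        unfolding realizes_def
      proof (intro allI impI)
        fix r a assume ra: "\<delta>X r = Some a \<and> f a \<noteq> {}"
        show "\<exists>q y. G' r = Some q \<and> \<delta>Y q = Some y \<and> y \<in> f a"
        proof (cases "r = v")
          case True then show ?thesis using ra b q0 by (auto simp: G'_def)
        next
          case False then show ?thesis using G0[unfolded realizes_def, rule_format, OF ra] by (simp add: G'_def)
        qed
      qed
      obtain q y where qy: "Option.bind (Option.bind (K1 u) G') H1 = Some q" "compl_rep \<delta>Y q = Some y"
          "y \<in> compl_prob f zz"
        using red[OF G', unfolded realizes_def, rule_format, OF conjI[OF cu compl_prob_ne]] by blast
      have Hq: "H1 q0 = Some q" using qy(1) v by (simp add: G'_def)
      have "y \<in> compl_prob f x"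
      proof (cases x)
        case None then show ?thesis by (simp add: compl_prob_def)
      next
        case (Some a) then show ?thesis using zx qy(3) by simp
      qed
      then show "\<exists>q y. Option.bind (Option.bind (K p) G) H1 = Some q \<and> compl_rep \<delta>Y q = Some y \<and> y \<in> compl_prob f x"
        using q0(1) Hq qy(2) by (auto simp: K_def)
    qed
  qed
qed

theorem proposition4p17:
  fixes \<delta>X :: "'a rep" and \<delta>Y :: "'b rep" and f :: "('a, 'b) problem"
  assumes "represented \<delta>X" and "represented \<delta>Y"
  shows "sW_le (compl_rep (jump_rep \<delta>X)) (compl_rep \<delta>Y) (compl_prob f)
               (jump_rep (compl_rep \<delta>X)) (compl_rep \<delta>Y) (compl_prob f)
       \<and> sW_equiv (jump_rep (compl_rep \<delta>X)) (compl_rep \<delta>Y) (compl_prob f)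
                  (compl_rep (jump_rep (compl_rep \<delta>X))) (compl_rep (compl_rep \<delta>Y))
                  (compl_prob (compl_prob f))
       \<and> (sW_equiv \<delta>X \<delta>Y f (compl_rep \<delta>X) (compl_rep \<delta>Y) (compl_prob f) \<longrightarrow>
           sW_equiv (jump_rep \<delta>X) \<delta>Y f (compl_rep (jump_rep \<delta>X)) (compl_rep \<delta>Y) (compl_prob f))"
proof (intro conjI impI)
  show "sW_le (compl_rep (jump_rep \<delta>X)) (compl_rep \<delta>Y) (compl_prob f)
               (jump_rep (compl_rep \<delta>X)) (compl_rep \<delta>Y) (compl_prob f)" by (rule R1)
  show "sW_equiv (jump_rep (compl_rep \<delta>X)) (compl_rep \<delta>Y) (compl_prob f)
                  (compl_rep (jump_rep (compl_rep \<delta>X))) (compl_rep (compl_rep \<delta>Y))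
                  (compl_prob (compl_prob f))"
    unfolding sW_equiv_def by (rule conjI[OF R2a R2b])
  assume h: "sW_equiv \<delta>X \<delta>Y f (compl_rep \<delta>X) (compl_rep \<delta>Y) (compl_prob f)"
  show "sW_equiv (jump_rep \<delta>X) \<delta>Y f (compl_rep (jump_rep \<delta>X)) (compl_rep \<delta>Y) (compl_prob f)"
    unfolding sW_equiv_def
    by (rule conjI[OF R3a R3b[OF assms(2) h[unfolded sW_equiv_def, THEN conjunct2]]])
qed


end
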